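(* (a) Consider Algorithm 1 with $x_0=0$, run on arbitrary vectors $g_t$ and non-negative learning rates. For any $t\ge1$ and any $x^*\in\mathbb{R}^d$, $$\|x_t\|\le\max\Big\{\|x^*\|+\sqrt{(S_{t-1}+2)B_{\phi_t}(x^*,x_t)},\;2\|x^*\|,\;4(S_{t-1}+2)B_{\phi_t}(x^*,x_t)\Big\}.$$ (b) If in addition $F$ is variationally coherent with minimizer $x^*$, $\mathcal{F}_t$ is the $\sigma$-algebra generated by $x_1,\dots,x_t,g_1,\dots,g_{t-1}$, $\mathbb{E}[g_t\mid\mathcal{F}_t]=\nabla F(x_t)$ and $\|g_t\|\le G$ a.s., each $\eta_t\ge0$ is $\mathcal{F}_t$-measurable, and for some $\gamma>0$ almost surely $\sum_t\eta_t^2\|g_t\|^2<\gamma$, $\sum_t\eta_t=\infty$, $\eta_t\le1/G$ for all $t$, then $\sup_{t\ge1}\|x_t\|<\infty$ almost surely.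
   Context: $\|\cdot\|$ is the Euclidean norm, $G>0$. For differentiable $f$, $B_f(x,y)=f(x)-f(y)-\langle\nabla f(y),x-y\rangle$. A function $F:\mathbb{R}^d\to\mathbb{R}$ is variationally coherent if it is continuously differentiable, has a unique minimizer $x^*$, and $\langle\nabla F(x),x-x^*\rangle\ge0$ for all $x$, with equality iff $x=x^*$. Auxiliary functions: $\psi^*(\theta,S,Q)=\exp\big(\max_{\beta\in[-1/2,1/2]}(\theta\beta-\beta^2S^2)-Q\big)$ for $\theta\in\mathbb{R},S>0,Q\ge0$; $\psi(x,S,Q)=\sup_{\theta\in\mathbb{R}}(\theta x-\psi^*(\theta,S,Q))$. Algorithm 1 with $x_0=0$: $S_0^2=4$, $Q_0=0$, $\theta_0=0$. For $t=1,2,\dots$: $\phi_t(x)=\psi(\|x\|,S_{t-1},Q_{t-1})$; $x_t$ is the unique minimizer of $\phi_t(x)-\langle\theta_{t-1},x\rangle$; receive $g_t$; $\ell_t=\eta_tg_t$, $S_t^2=S_{t-1}^2+\|\ell_t\|^2$ ($S_t>0$), $Q_t=Q_{t-1}+\|\ell_t\|^2/S_t^2$, $\theta_t=\theta_{t-1}-\ell_t$. *)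

theory Defs
  imports "HOL-Analysis.Analysis" "HOL-Probability.Probability"
begin

definition psi_star :: "real \<Rightarrow> real \<Rightarrow> real \<Rightarrow> real" where
  "psi_star \<theta> S Q = exp ((SUP \<beta>\<in>{-1/2..1/2}. \<theta> * \<beta> - \<beta>^2 * S^2) - Q)"

definition psi :: "real \<Rightarrow> real \<Rightarrow> real \<Rightarrow> real" where
  "psi x S Q = (SUP \<theta>. \<theta> * x - psi_star \<theta> S Q)"

definition bregman :: "('a::real_normed_vector \<Rightarrow> real) \<Rightarrow> 'a \<Rightarrow> 'a \<Rightarrow> real" where
  "bregman f x y = f x - f y - frechet_derivative f (at y) (x - y)"

text \<open>Algorithm 1 with x_0 = 0.  Gradients g t and learning rates eta t are indexed from t = 1;
  l_t = eta_t g_t.  alg_S2 t is S_t^2.\<close>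
primrec alg_S2 :: "(nat \<Rightarrow> 'a::euclidean_space) \<Rightarrow> (nat \<Rightarrow> real) \<Rightarrow> nat \<Rightarrow> real" where
  "alg_S2 g \<eta> 0 = 4"
| "alg_S2 g \<eta> (Suc t) = alg_S2 g \<eta> t + (norm (\<eta> (Suc t) *\<^sub>R g (Suc t)))^2"

primrec alg_Q :: "(nat \<Rightarrow> 'a::euclidean_space) \<Rightarrow> (nat \<Rightarrow> real) \<Rightarrow> nat \<Rightarrow> real" where
  "alg_Q g \<eta> 0 = 0"
| "alg_Q g \<eta> (Suc t) = alg_Q g \<eta> t + (norm (\<eta> (Suc t) *\<^sub>R g (Suc t)))^2 / alg_S2 g \<eta> (Suc t)"

primrec alg_theta :: "(nat \<Rightarrow> 'a::euclidean_space) \<Rightarrow> (nat \<Rightarrow> real) \<Rightarrow> nat \<Rightarrow> 'a" where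
  "alg_theta g \<eta> 0 = 0"
| "alg_theta g \<eta> (Suc t) = alg_theta g \<eta> t - \<eta> (Suc t) *\<^sub>R g (Suc t)"

definition alg_S :: "(nat \<Rightarrow> 'a::euclidean_space) \<Rightarrow> (nat \<Rightarrow> real) \<Rightarrow> nat \<Rightarrow> real" where
  "alg_S g \<eta> t = sqrt (alg_S2 g \<eta> t)"

definition alg_phi :: "(nat \<Rightarrow> 'a::euclidean_space) \<Rightarrow> (nat \<Rightarrow> real) \<Rightarrow> nat \<Rightarrow> 'a \<Rightarrow> real" where
  "alg_phi g \<eta> t x = psi (norm x) (alg_S g \<eta> (t - 1)) (alg_Q g \<eta> (t - 1))"

definition alg_x :: "(nat \<Rightarrow> 'a::euclidean_space) \<Rightarrow> (nat \<Rightarrow> real) \<Rightarrow> nat \<Rightarrow> 'a" where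
  "alg_x g \<eta> t = (if t = 0 then 0 else
     (THE x. \<forall>y. alg_phi g \<eta> t x - inner (alg_theta g \<eta> (t - 1)) x
                 \<le> alg_phi g \<eta> t y - inner (alg_theta g \<eta> (t - 1)) y))"

definition variationally_coherent ::
  "('a::euclidean_space \<Rightarrow> real) \<Rightarrow> ('a \<Rightarrow> 'a) \<Rightarrow> 'a \<Rightarrow> bool" where
  "variationally_coherent F F' xs \<longleftrightarrow>
     (\<forall>x. (F has_derivative (\<lambda>h. inner (F' x) h)) (at x)) \<and> continuous_on UNIV F' \<and>
     (\<forall>y. F xs \<le> F y) \<and> (\<forall>z. (\<forall>y. F z \<le> F y) \<longrightarrow> z = xs) \<and>
     (\<forall>x. inner (F' x) (x - xs) \<ge> 0 \<and> (inner (F' x) (x - xs) = 0 \<longleftrightarrow> x = xs))"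

definition rand_x :: "(nat \<Rightarrow> 'w \<Rightarrow> 'a::euclidean_space) \<Rightarrow> (nat \<Rightarrow> 'w \<Rightarrow> real) \<Rightarrow> nat \<Rightarrow> 'w \<Rightarrow> 'a" where
  "rand_x g \<eta> t w = alg_x (\<lambda>s. g s w) (\<lambda>s. \<eta> s w) t"

definition gen_sigma :: "'w measure \<Rightarrow> ('w \<Rightarrow> 'a::topological_space) set \<Rightarrow> 'w measure" where
  "gen_sigma M fs = sigma (space M) (\<Union>f\<in>fs. {f -` A \<inter> space M | A. A \<in> sets borel})"

definition alg_filtration ::
  "'w measure \<Rightarrow> (nat \<Rightarrow> 'w \<Rightarrow> 'a::euclidean_space) \<Rightarrow> (nat \<Rightarrow> 'w \<Rightarrow> real) \<Rightarrow> nat \<Rightarrow> 'w measure" where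
  "alg_filtration M g \<eta> t =
     gen_sigma M ({rand_x g \<eta> s | s. 1 \<le> s \<and> s \<le> t} \<union> {g s | s. 1 \<le> s \<and> s < t})"

end

theory Submission
  imports Defs
begin

definition clamp :: "real \<Rightarrow> real \<Rightarrow> real" where
  "clamp S2 \<sigma> = max (-1/2) (min (1/2) (\<sigma> / (2*S2)))"

definition hv :: "real \<Rightarrow> real \<Rightarrow> real" where
  "hv S2 \<sigma> = \<sigma> * clamp S2 \<sigma> - (clamp S2 \<sigma>)^2 * S2"

lemma clamp_bounds: "-1/2 \<le> clamp S2 \<sigma>" "clamp S2 \<sigma> \<le> 1/2"
  by (auto simp: clamp_def)

lemma clamp_nonneg: "S2 > 0 \<Longrightarrow> \<sigma> \<ge> 0 \<Longrightarrow> clamp S2 \<sigma> \<ge> 0"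
proof -
  assume a: "S2 > 0" "\<sigma> \<ge> 0"
  then have "\<sigma> / (2*S2) \<ge> 0" by simp
  then show ?thesis unfolding clamp_def by (simp add: max_def min_def)
qed

lemma clamp_zero[simp]: "clamp S2 0 = 0"
  by (auto simp: clamp_def)

lemma clamp_pos: "S2 > 0 \<Longrightarrow> \<sigma> > 0 \<Longrightarrow> clamp S2 \<sigma> > 0"
proof -
  assume a: "S2 > 0" "\<sigma> > 0"
  then have "\<sigma> / (2*S2) > 0" by simp
  then show ?thesis unfolding clamp_def by (simp add: max_def min_def)
qed

lemma hv_max:
  assumes "S2 > 0" "-1/2 \<le> \<beta>" "\<beta> \<le> 1/2"
  shows "\<sigma>*\<beta> - \<beta>^2 * S2 \<le> hv S2 \<sigma> - S2 * (\<beta> - clamp S2 \<sigma>)^2"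
proof -
  consider "\<sigma> / (2*S2) \<le> -1/2" | "\<sigma> / (2*S2) \<ge> 1/2" | "-1/2 < \<sigma> / (2*S2)" "\<sigma> / (2*S2) < 1/2" by linarith
  then show ?thesis
  proof cases
    case 1
    then have c: "clamp S2 \<sigma> = -1/2" by (auto simp: clamp_def)
    from 1 assms have "\<sigma> \<le> - S2" by (simp add: field_simps)
    have "(\<sigma> + S2)*(\<beta> + 1/2) \<le> 0" by (rule mult_nonpos_nonneg) (use assms \<open>\<sigma> \<le> - S2\<close> in auto)
    moreover have "hv S2 \<sigma> - S2 * (\<beta> - clamp S2 \<sigma>)^2 - (\<sigma>*\<beta> - \<beta>^2 * S2) = -((\<sigma> + S2)*(\<beta> + 1/2))"
      unfolding hv_def c by (simp add: power2_eq_square field_simps)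
    ultimately show ?thesis by linarith
  next
    case 2
    then have c: "clamp S2 \<sigma> = 1/2" by (auto simp: clamp_def)
    from 2 assms have "\<sigma> \<ge> S2" by (simp add: field_simps)
    have "(\<sigma> - S2)*(\<beta> - 1/2) \<le> 0" by (rule mult_nonneg_nonpos) (use assms \<open>\<sigma> \<ge> S2\<close> in auto)
    moreover have "hv S2 \<sigma> - S2 * (\<beta> - clamp S2 \<sigma>)^2 - (\<sigma>*\<beta> - \<beta>^2 * S2) = -((\<sigma> - S2)*(\<beta> - 1/2))"
      unfolding hv_def c by (simp add: power2_eq_square field_simps)
    ultimately show ?thesis by linarith
  next
    case 3
    then have c: "clamp S2 \<sigma> = \<sigma> / (2*S2)" by (auto simp: clamp_def)
    have s: "\<sigma> = 2 * S2 * clamp S2 \<sigma>" using c assms by simp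
    show ?thesis unfolding hv_def by (subst (1 2) s) (simp add: power2_eq_square algebra_simps)
  qed
qed

lemma hv_grad:
  assumes "S2 > 0"
  shows "hv S2 \<tau> \<ge> hv S2 \<sigma> + clamp S2 \<sigma> * (\<tau> - \<sigma>)"
proof -
  have "\<tau> * clamp S2 \<sigma> - (clamp S2 \<sigma>)^2 * S2 \<le> hv S2 \<tau> - S2 * (clamp S2 \<sigma> - clamp S2 \<tau>)^2"
    using hv_max[OF assms clamp_bounds] .
  moreover have "S2 * (clamp S2 \<sigma> - clamp S2 \<tau>)^2 \<ge> 0" using assms by simp
  ultimately show ?thesis unfolding hv_def by (simp add: algebra_simps)
qed

lemma hv_upper:
  assumes "S2 > 0"
  shows "hv S2 \<tau> \<le> hv S2 \<sigma> + clamp S2 \<sigma> * (\<tau> - \<sigma>) + (\<tau> - \<sigma>)^2 / (4*S2)"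
proof -
  define D where "D = clamp S2 \<tau> - clamp S2 \<sigma>"
  have 1: "\<sigma> * clamp S2 \<tau> - (clamp S2 \<tau>)^2 * S2 \<le> hv S2 \<sigma> - S2 * D^2"
    using hv_max[OF assms clamp_bounds] unfolding D_def .
  have 2: "(\<tau> - \<sigma>) * D - S2 * D^2 \<le> (\<tau> - \<sigma>)^2 / (4*S2)"
  proof -
    have "0 \<le> (\<tau> - \<sigma> - 2*S2*D)^2" by simp
    then have "4*S2*((\<tau> - \<sigma>) * D - S2 * D^2) \<le> (\<tau> - \<sigma>)^2" by (simp add: power2_eq_square algebra_simps)
    then show ?thesis using assms by (simp add: field_simps)
  qed
  have "hv S2 \<tau> = \<sigma> * clamp S2 \<tau> - (clamp S2 \<tau>)^2 * S2 + (\<tau> - \<sigma>) * (clamp S2 \<sigma> + D)"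
    unfolding hv_def D_def by (simp add: algebra_simps)
  with 1 2 show ?thesis by (simp add: algebra_simps)
qed

lemma hv_sup:
  assumes "S2 > 0"
  shows "(SUP \<beta>\<in>{-1/2..1/2}. \<sigma> * \<beta> - \<beta>^2 * S2) = hv S2 \<sigma>"
proof (rule cSup_eq_maximum)
  show "hv S2 \<sigma> \<in> (\<lambda>\<beta>. \<sigma> * \<beta> - \<beta>^2 * S2) ` {-1/2..1/2}"
    unfolding hv_def using clamp_bounds by auto
  fix x assume "x \<in> (\<lambda>\<beta>. \<sigma> * \<beta> - \<beta>^2 * S2) ` {-1/2..1/2}"
  then obtain \<beta> where b: "-1/2 \<le> \<beta>" "\<beta> \<le> 1/2" "x = \<sigma> * \<beta> - \<beta>^2 * S2" by auto
  have "S2 * (\<beta> - clamp S2 \<sigma>)^2 \<ge> 0" using assms by simp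
  with hv_max[OF assms b(1,2), of \<sigma>] b(3) show "x \<le> hv S2 \<sigma>" by linarith
qed

lemma psi_star_eq:
  assumes "S \<noteq> 0"
  shows "psi_star \<sigma> S Q = exp (hv (S^2) \<sigma> - Q)"
  unfolding psi_star_def using hv_sup[of "S^2" \<sigma>] assms by simp

definition bvec :: "real \<Rightarrow> 'a::real_inner \<Rightarrow> 'a" where
  "bvec S2 \<theta> = (clamp S2 (norm \<theta>) / norm \<theta>) *\<^sub>R \<theta>"

lemma norm_bvec: "S2 > 0 \<Longrightarrow> norm (bvec S2 \<theta>) = clamp S2 (norm \<theta>)"
  unfolding bvec_def using clamp_nonneg[of S2 "norm \<theta>"]
  by (cases "\<theta> = 0") auto

lemma inner_bvec: "inner \<theta> (bvec S2 \<theta>) = norm \<theta> * clamp S2 (norm \<theta>)"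
  unfolding bvec_def by (cases "\<theta> = 0") (auto simp: power2_norm_eq_inner[symmetric] power2_eq_square)

lemma norm_diff_scaled_sq:
  fixes b \<theta> :: "'a::real_inner"
  shows "(norm (b - k *\<^sub>R \<theta>))^2 = (norm b)^2 - 2*k*inner \<theta> b + k^2 * (norm \<theta>)^2"
  unfolding power2_norm_eq_inner by (simp add: inner_diff_left inner_diff_right inner_commute algebra_simps power2_eq_square)

lemma vec_max:
  fixes \<theta> b :: "'a::real_inner"
  assumes "S2 > 0" "norm b \<le> 1/2"
  shows "inner \<theta> b - S2 * (norm b)^2 \<le> hv S2 (norm \<theta>) - S2 * (norm (b - bvec S2 \<theta>))^2"
proof (cases "\<theta> = 0")
  case True
  then show ?thesis by (simp add: bvec_def hv_def)
next
  case False
  define \<sigma> where "\<sigma> = norm \<theta>"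
  define p where "p = inner \<theta> b"
  have sp: "\<sigma> > 0" using False \<sigma>_def by simp
  have pb: "p \<le> \<sigma> / 2"
  proof -
    have "p \<le> \<sigma> * norm b" unfolding p_def \<sigma>_def by (metis norm_cauchy_schwarz)
    also have "\<dots> \<le> \<sigma> * (1/2)" using assms(2) sp by (intro mult_left_mono) auto
    finally show ?thesis by simp
  qed
  have e: "(norm (b - bvec S2 \<theta>))^2 = (norm b)^2 - 2*(clamp S2 \<sigma> / \<sigma>)*p + (clamp S2 \<sigma> / \<sigma>)^2 * \<sigma>^2"
    unfolding bvec_def p_def \<sigma>_def by (rule norm_diff_scaled_sq)
  show ?thesis
  proof (cases "\<sigma> \<le> S2")
    case True
    then have c: "clamp S2 \<sigma> = \<sigma> / (2*S2)" using sp assms by (auto simp: clamp_def field_simps)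
    have "hv S2 \<sigma> - S2 * (norm (b - bvec S2 \<theta>))^2 = p - S2 * (norm b)^2"
      unfolding e hv_def c using sp assms by (simp add: field_simps power2_eq_square)
    then have "p - S2 * (norm b)^2 \<le> hv S2 \<sigma> - S2 * (norm (b - bvec S2 \<theta>))^2" by simp
    then show ?thesis unfolding p_def \<sigma>_def by simp
  next
    case False
    then have c: "clamp S2 \<sigma> = 1/2" using sp assms by (auto simp: clamp_def field_simps)
    have h: "hv S2 \<sigma> = \<sigma>/2 - S2/4" unfolding hv_def c by (simp add: power2_eq_square)
    have "p * (\<sigma> - S2) \<le> \<sigma>/2 * (\<sigma> - S2)" using pb False by (intro mult_right_mono) auto
    then have "p - S2 * (norm b)^2 \<le> \<sigma>/2 - S2/4 - S2 * ((norm b)^2 - 2*(1/2/\<sigma>)*p + (1/2/\<sigma>)^2*\<sigma>^2)"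
      using sp by (simp add: field_simps power2_eq_square)
    then have "p - S2 * (norm b)^2 \<le> hv S2 \<sigma> - S2 * (norm (b - bvec S2 \<theta>))^2"
      unfolding e h c by simp
    then show ?thesis unfolding p_def \<sigma>_def by simp
  qed
qed

lemma vec_step:
  fixes \<theta> l :: "'a::real_inner"
  assumes "S2 > 0"
  shows "hv S2 (norm (\<theta> - l)) \<le> hv S2 (norm \<theta>) - inner l (bvec S2 \<theta>) + (norm l)^2 / (4*S2)"
proof -
  define b' where "b' = bvec S2 (\<theta> - l)"
  define \<delta> where "\<delta> = b' - bvec S2 \<theta>"
  have nb: "norm b' \<le> 1/2" unfolding b'_def using norm_bvec[OF assms] clamp_bounds by metis
  have h': "hv S2 (norm (\<theta> - l)) = inner (\<theta> - l) b' - S2 * (norm b')^2"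
    unfolding b'_def inner_bvec norm_bvec[OF assms] hv_def by (simp add: algebra_simps)
  have m: "inner \<theta> b' - S2 * (norm b')^2 \<le> hv S2 (norm \<theta>) - S2 * (norm \<delta>)^2"
    unfolding \<delta>_def by (rule vec_max[OF assms nb])
  have q: "- inner l \<delta> - S2 * (norm \<delta>)^2 \<le> (norm l)^2 / (4*S2)"
  proof -
    have "- inner l \<delta> \<le> norm l * norm \<delta>"
      using norm_cauchy_schwarz[of "-l" \<delta>] by simp
    moreover have "0 \<le> (norm l - 2*S2*norm \<delta>)^2" by simp
    then have "4*S2*(norm l * norm \<delta> - S2 * (norm \<delta>)^2) \<le> (norm l)^2"
      by (simp add: power2_eq_square algebra_simps)
    then have "norm l * norm \<delta> - S2 * (norm \<delta>)^2 \<le> (norm l)^2 / (4*S2)"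
      using assms by (simp add: field_simps)
    ultimately show ?thesis by linarith
  qed
  have "inner l b' = inner l (bvec S2 \<theta>) + inner l \<delta>" unfolding \<delta>_def by (simp add: inner_diff_right)
  with h' m q show ?thesis by (simp add: inner_diff_left)
qed

lemma hv_lower: "S2 > 0 \<Longrightarrow> hv S2 \<tau> \<ge> \<bar>\<tau>\<bar>/2 - S2/4"
proof -
  assume a: "S2 > 0"
  define \<beta> where "\<beta> = (if \<tau> \<ge> 0 then 1/2 else -1/2::real)"
  have b: "-1/2 \<le> \<beta>" "\<beta> \<le> 1/2" unfolding \<beta>_def by auto
  have "\<tau> * \<beta> - \<beta>^2 * S2 \<le> hv S2 \<tau> - S2 * (\<beta> - clamp S2 \<tau>)^2" by (rule hv_max[OF a b])
  moreover have "S2 * (\<beta> - clamp S2 \<tau>)^2 \<ge> 0" using a by simp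
  moreover have "\<tau> * \<beta> - \<beta>^2 * S2 = \<bar>\<tau>\<bar>/2 - S2/4" unfolding \<beta>_def by (auto simp: power2_eq_square)
  ultimately show ?thesis by linarith
qed

lemma hv_le: "S2 > 0 \<Longrightarrow> hv S2 \<tau> \<le> \<bar>\<tau>\<bar>/2"
proof -
  assume a: "S2 > 0"
  have "\<tau> * clamp S2 \<tau> \<le> \<bar>\<tau>\<bar> * \<bar>clamp S2 \<tau>\<bar>" by (metis abs_ge_self abs_mult)
  also have "\<dots> \<le> \<bar>\<tau>\<bar> * (1/2)" using clamp_bounds[of S2 \<tau>] by (intro mult_left_mono) auto
  finally show ?thesis unfolding hv_def using a by (simp add: algebra_simps) (smt (verit) zero_le_power2 mult_nonneg_nonneg)
qed

definition ff :: "real \<Rightarrow> real \<Rightarrow> real \<Rightarrow> real" where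
  "ff S2 Q \<tau> = exp (hv S2 \<tau> - Q)"

lemma ff_pos: "ff S2 Q \<tau> > 0" unfolding ff_def by simp

lemma ff_grad:
  assumes "S2 > 0"
  shows "ff S2 Q \<tau> \<ge> ff S2 Q \<sigma> + ff S2 Q \<sigma> * clamp S2 \<sigma> * (\<tau> - \<sigma>)"
proof -
  have "ff S2 Q \<tau> = ff S2 Q \<sigma> * exp (hv S2 \<tau> - hv S2 \<sigma>)" unfolding ff_def by (simp add: mult_exp_exp)
  also have "\<dots> \<ge> ff S2 Q \<sigma> * (1 + (hv S2 \<tau> - hv S2 \<sigma>))"
    using ff_pos by (intro mult_left_mono exp_ge_add_one_self) (auto intro: less_imp_le)
  finally have 1: "ff S2 Q \<tau> \<ge> ff S2 Q \<sigma> * (1 + (hv S2 \<tau> - hv S2 \<sigma>))" .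
  have "ff S2 Q \<sigma> * (1 + clamp S2 \<sigma> * (\<tau> - \<sigma>)) \<le> ff S2 Q \<sigma> * (1 + (hv S2 \<tau> - hv S2 \<sigma>))"
    using hv_grad[OF assms, where \<tau>=\<tau> and \<sigma>=\<sigma>] ff_pos[of S2 Q \<sigma>] by (intro mult_left_mono) auto
  with 1 show ?thesis by (simp add: algebra_simps)
qed

lemma psi_star_ff: "S \<noteq> 0 \<Longrightarrow> psi_star \<tau> S Q = ff (S^2) Q \<tau>"
  unfolding ff_def by (rule psi_star_eq)

lemma psi_bdd:
  assumes "S \<noteq> 0"
  shows "bdd_above (range (\<lambda>\<theta>. \<theta> * r - psi_star \<theta> S Q))"
proof (rule bdd_aboveI2)
  fix \<theta> :: real
  define A where "A = exp (-(S^2)/4 - Q)"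
  have A: "A > 0" unfolding A_def by simp
  have S2: "S^2 > 0" using assms by simp
  have "psi_star \<theta> S Q = exp (hv (S^2) \<theta> - Q)" using psi_star_eq[OF assms] .
  also have "\<dots> \<ge> exp (\<bar>\<theta>\<bar>/2 - S^2/4 - Q)" using hv_lower[OF S2, of \<theta>] by simp
  finally have 1: "psi_star \<theta> S Q \<ge> A * exp (\<bar>\<theta>\<bar>/2)" unfolding A_def by (simp add: mult_exp_exp algebra_simps)
  have "exp (\<bar>\<theta>\<bar>/2) = (exp (\<bar>\<theta>\<bar>/4))^2" by (simp add: exp_double[symmetric] power2_eq_square exp_add[symmetric])
  also have "\<dots> \<ge> (1 + \<bar>\<theta>\<bar>/4)^2" by (rule power_mono) (auto intro: exp_ge_add_one_self)
  also have "(1 + \<bar>\<theta>\<bar>/4)^2 \<ge> \<theta>^2/16" by (simp add: power2_eq_square algebra_simps)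
  finally have 2: "exp (\<bar>\<theta>\<bar>/2) \<ge> \<theta>^2/16" .
  have 3: "\<theta> * r - A * (\<theta>^2/16) \<le> 4 * r^2 / A"
  proof -
    have "0 \<le> (A * \<theta> - 8 * r)^2" by simp
    then have "A * (\<theta> * r - A * (\<theta>^2/16)) \<le> 4 * r^2" by (simp add: power2_eq_square algebra_simps)
    then show ?thesis using A by (simp add: field_simps)
  qed
  have "A * (\<theta>^2/16) \<le> psi_star \<theta> S Q" using 1 2 A by (meson mult_left_mono order_trans less_imp_le)
  with 3 show "\<theta> * r - psi_star \<theta> S Q \<le> 4 * r^2 / A" by linarith
qed

lemma psi_ge:
  assumes "S \<noteq> 0"
  shows "psi r S Q \<ge> \<tau> * r - ff (S^2) Q \<tau>"
proof -
  have "\<tau> * r - psi_star \<tau> S Q \<le> psi r S Q"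
    unfolding psi_def by (rule cSUP_upper[OF _ psi_bdd[OF assms]]) simp
  then show ?thesis using psi_star_ff[OF assms] by simp
qed

lemma psi_attained:
  assumes "S \<noteq> 0" "r = ff (S^2) Q \<sigma> * clamp (S^2) \<sigma>"
  shows "psi r S Q = \<sigma> * r - ff (S^2) Q \<sigma>"
  unfolding psi_def
proof (rule cSup_eq_maximum)
  have S2: "S^2 > 0" using assms by simp
  show "\<sigma> * r - ff (S^2) Q \<sigma> \<in> range (\<lambda>\<theta>. \<theta> * r - psi_star \<theta> S Q)"
    using psi_star_ff[OF assms(1)] by (auto intro!: image_eqI[where x=\<sigma>])
  fix x assume "x \<in> range (\<lambda>\<theta>. \<theta> * r - psi_star \<theta> S Q)"
  then obtain \<tau> where x: "x = \<tau> * r - ff (S^2) Q \<tau>" using psi_star_ff[OF assms(1)] by auto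
  have "ff (S^2) Q \<tau> \<ge> ff (S^2) Q \<sigma> + r * (\<tau> - \<sigma>)" using ff_grad[OF S2, where Q=Q and \<tau>=\<tau> and \<sigma>=\<sigma>] assms(2) by simp
  then show "x \<le> \<sigma> * r - ff (S^2) Q \<sigma>" unfolding x by (simp add: algebra_simps)
qed

lemma quad_has_derivative:
  fixes f :: "'a::real_normed_vector \<Rightarrow> real"
  assumes "bounded_linear L" "d > 0" "C \<ge> 0"
    and "\<And>y. norm (y - x) < d \<Longrightarrow> \<bar>f y - f x - L (y - x)\<bar> \<le> C * (norm (y - x))^2"
  shows "(f has_derivative L) (at x)"
  unfolding has_derivative_at_alt
proof (intro conjI allI impI)
  show "bounded_linear L" by fact
  fix e :: real assume e: "e > 0"
  define d' where "d' = min d (e / (C + 1))"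
  have d': "d' > 0" unfolding d'_def using assms e by simp
  show "\<exists>d>0. \<forall>y. norm (y - x) < d \<longrightarrow> norm (f y - f x - L (y - x)) \<le> e * norm (y - x)"
  proof (intro exI[of _ d'] conjI allI impI d')
    fix y assume y: "norm (y - x) < d'"
    then have "norm (y - x) < d" "norm (y - x) \<le> e / (C + 1)" unfolding d'_def by auto
    have "norm (f y - f x - L (y - x)) \<le> C * (norm (y - x))^2" using assms(4) \<open>norm (y - x) < d\<close> by simp
    also have "\<dots> = (C * norm (y - x)) * norm (y - x)" by (simp add: power2_eq_square)
    also have "\<dots> \<le> e * norm (y - x)"
    proof (rule mult_right_mono)
      have "C * norm (y - x) \<le> (C + 1) * norm (y - x)" by (simp add: algebra_simps)
      also have "\<dots> \<le> (C + 1) * (e / (C + 1))" using \<open>norm (y - x) \<le> e / (C + 1)\<close> assms(3) by (intro mult_left_mono) auto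
      also have "\<dots> = e" using assms(3) by simp
      finally show "C * norm (y - x) \<le> e" .
    qed simp
    finally show "norm (f y - f x - L (y - x)) \<le> e * norm (y - x)" .
  qed
qed

lemma hv_deriv:
  assumes "S2 > 0"
  shows "(hv S2 has_real_derivative clamp S2 \<sigma>) (at \<sigma>)"
  unfolding has_field_derivative_def
proof (rule quad_has_derivative[where d=1 and C="1/(4*S2)"])
  show "bounded_linear ((*) (clamp S2 \<sigma>))" by (rule bounded_linear_mult_right)
  fix y
  have "hv S2 y - hv S2 \<sigma> - clamp S2 \<sigma> * (y - \<sigma>) \<ge> 0" using hv_grad[OF assms, where \<tau>=y and \<sigma>=\<sigma>] by simp
  moreover have "hv S2 y - hv S2 \<sigma> - clamp S2 \<sigma> * (y - \<sigma>) \<le> 1/(4*S2) * (norm (y - \<sigma>))^2"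
    using hv_upper[OF assms, of y \<sigma>] by simp
  ultimately show "\<bar>hv S2 y - hv S2 \<sigma> - clamp S2 \<sigma> * (y - \<sigma>)\<bar> \<le> 1/(4*S2) * (norm (y - \<sigma>))^2" by simp
qed (use assms in auto)

lemma ff_deriv:
  assumes "S2 > 0"
  shows "(ff S2 Q has_real_derivative ff S2 Q \<sigma> * clamp S2 \<sigma>) (at \<sigma>)"
  unfolding ff_def
  by (rule derivative_eq_intros hv_deriv[OF assms] | simp)+

lemma psi_attained_imp:
  assumes "S \<noteq> 0" "psi r S Q = \<sigma> * r - ff (S^2) Q \<sigma>"
  shows "r = ff (S^2) Q \<sigma> * clamp (S^2) \<sigma>"
proof -
  have S2: "S^2 > 0" using assms by simp
  have d: "((\<lambda>\<tau>. \<tau> * r - ff (S^2) Q \<tau>) has_real_derivative (r - ff (S^2) Q \<sigma> * clamp (S^2) \<sigma>)) (at \<sigma>)"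
    by (rule derivative_eq_intros ff_deriv[OF S2] | simp)+
  have "r - ff (S^2) Q \<sigma> * clamp (S^2) \<sigma> = 0"
  proof (rule DERIV_local_max[OF d, of 1])
    show "\<forall>y. \<bar>\<sigma> - y\<bar> < 1 \<longrightarrow> y * r - ff (S^2) Q y \<le> \<sigma> * r - ff (S^2) Q \<sigma>"
      using psi_ge[OF assms(1)] assms(2) by metis
  qed simp
  then show ?thesis by simp
qed

definition xmin :: "real \<Rightarrow> real \<Rightarrow> 'a::real_inner \<Rightarrow> 'a" where
  "xmin S2 Q \<theta> = ff S2 Q (norm \<theta>) *\<^sub>R bvec S2 \<theta>"

lemma norm_xmin: "S2 > 0 \<Longrightarrow> norm (xmin S2 Q \<theta>) = ff S2 Q (norm \<theta>) * clamp S2 (norm \<theta>)"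
  unfolding xmin_def using ff_pos[of S2 Q "norm \<theta>"] by (simp add: norm_bvec)

lemma inner_xmin: "inner \<theta> (xmin S2 Q \<theta>) = norm \<theta> * (ff S2 Q (norm \<theta>) * clamp S2 (norm \<theta>))"
  unfolding xmin_def by (simp add: inner_bvec)

lemma psi_xmin:
  assumes "S \<noteq> 0"
  shows "psi (norm (xmin (S^2) Q \<theta>)) S Q = inner \<theta> (xmin (S^2) Q \<theta>) - ff (S^2) Q (norm \<theta>)"
proof -
  have S2: "S^2 > 0" using assms by simp
  show ?thesis using psi_attained[OF assms norm_xmin[OF S2, of Q \<theta>]] inner_xmin[of \<theta> "S^2" Q] norm_xmin[OF S2, of Q \<theta>] by simp
qed

lemma xmin_lower:
  fixes \<theta> y :: "'a::euclidean_space"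
  assumes "S \<noteq> 0"
  shows "psi (norm y) S Q - inner \<theta> y \<ge> - ff (S^2) Q (norm \<theta>)"
proof -
  have "psi (norm y) S Q \<ge> norm \<theta> * norm y - ff (S^2) Q (norm \<theta>)" by (rule psi_ge[OF assms])
  moreover have "inner \<theta> y \<le> norm \<theta> * norm y" by (rule norm_cauchy_schwarz)
  ultimately show ?thesis by linarith
qed

lemma xmin_unique:
  fixes \<theta> x :: "'a::euclidean_space"
  assumes "S \<noteq> 0" "psi (norm x) S Q - inner \<theta> x \<le> - ff (S^2) Q (norm \<theta>)"
  shows "x = xmin (S^2) Q \<theta>"
proof -
  have S2: "S^2 > 0" using assms by simp
  define \<sigma> where "\<sigma> = norm \<theta>"
  have 1: "psi (norm x) S Q \<ge> \<sigma> * norm x - ff (S^2) Q \<sigma>" unfolding \<sigma>_def by (rule psi_ge[OF assms(1)])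
  have 2: "inner \<theta> x \<le> \<sigma> * norm x" unfolding \<sigma>_def by (rule norm_cauchy_schwarz)
  have e1: "psi (norm x) S Q = \<sigma> * norm x - ff (S^2) Q \<sigma>" using 1 2 assms(2) unfolding \<sigma>_def by linarith
  have e2: "inner \<theta> x = \<sigma> * norm x" using 1 2 assms(2) unfolding \<sigma>_def by linarith
  have nx: "norm x = ff (S^2) Q \<sigma> * clamp (S^2) \<sigma>" by (rule psi_attained_imp[OF assms(1) e1])
  show ?thesis
  proof (cases "\<theta> = 0")
    case True
    then have "x = 0" using nx \<sigma>_def by simp
    then show ?thesis using True by (simp add: xmin_def bvec_def)
  next
    case False
    then have sp: "\<sigma> > 0" unfolding \<sigma>_def by simp
    have "norm \<theta> *\<^sub>R x = norm x *\<^sub>R \<theta>" using e2 unfolding \<sigma>_def by (simp add: norm_cauchy_schwarz_eq)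
    then have "(1/\<sigma>) *\<^sub>R (\<sigma> *\<^sub>R x) = (1/\<sigma>) *\<^sub>R (norm x *\<^sub>R \<theta>)" unfolding \<sigma>_def by simp
    then have "x = (norm x / \<sigma>) *\<^sub>R \<theta>" using sp by simp
    also have "\<dots> = xmin (S^2) Q \<theta>" unfolding xmin_def bvec_def nx \<sigma>_def by (simp add: mult.commute)
    finally show ?thesis .
  qed
qed

lemma xmin_the:
  fixes \<theta> :: "'a::euclidean_space"
  assumes "S \<noteq> 0"
  shows "(THE x. \<forall>y. psi (norm x) S Q - inner \<theta> x \<le> psi (norm y) S Q - inner \<theta> y) = xmin (S^2) Q \<theta>"
proof (rule the_equality)
  show "\<forall>y. psi (norm (xmin (S^2) Q \<theta>)) S Q - inner \<theta> (xmin (S^2) Q \<theta>) \<le> psi (norm y) S Q - inner \<theta> y"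
  proof
    fix y
    show "psi (norm (xmin (S^2) Q \<theta>)) S Q - inner \<theta> (xmin (S^2) Q \<theta>) \<le> psi (norm y) S Q - inner \<theta> y"
      using psi_xmin[OF assms, of Q \<theta>] xmin_lower[OF assms, where y=y and \<theta>=\<theta> and Q=Q] by linarith
  qed
  fix x assume "\<forall>y. psi (norm x) S Q - inner \<theta> x \<le> psi (norm y) S Q - inner \<theta> y"
  then have "psi (norm x) S Q - inner \<theta> x \<le> psi (norm (xmin (S^2) Q \<theta>)) S Q - inner \<theta> (xmin (S^2) Q \<theta>)" by blast
  then have "psi (norm x) S Q - inner \<theta> x \<le> - ff (S^2) Q (norm \<theta>)" using psi_xmin[OF assms, of Q \<theta>] by simp
  then show "x = xmin (S^2) Q \<theta>" by (rule xmin_unique[OF assms])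
qed

lemma alg_S2_ge: "alg_S2 g \<eta> n \<ge> 4"
  by (induction n) (auto intro!: add_increasing2)

lemma alg_Q_ge: "alg_Q g \<eta> n \<ge> 0"
proof (induction n)
  case (Suc n)
  have "alg_S2 g \<eta> (Suc n) > 0" using alg_S2_ge[of g \<eta> "Suc n"] by linarith
  then show ?case using Suc by (simp del: alg_S2.simps)
qed simp

lemma alg_S_sq: "(alg_S g \<eta> n)^2 = alg_S2 g \<eta> n"
  unfolding alg_S_def using alg_S2_ge[of g \<eta> n] by simp

lemma alg_S_ne: "alg_S g \<eta> n \<noteq> 0"
  unfolding alg_S_def using alg_S2_ge[of g \<eta> n] by simp

lemma alg_x_eq:
  assumes "t \<ge> 1"
  shows "alg_x g \<eta> t = xmin (alg_S2 g \<eta> (t-1)) (alg_Q g \<eta> (t-1)) (alg_theta g \<eta> (t-1))"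
  using assms xmin_the[OF alg_S_ne[of g \<eta> "t-1"], of "alg_Q g \<eta> (t-1)" "alg_theta g \<eta> (t-1)"]
  unfolding alg_x_def alg_phi_def alg_S_sq by simp

lemma exp_sq_lower: "(x::real) \<ge> -2 \<Longrightarrow> exp x \<ge> (1 + x/2)^2"
proof -
  assume "x \<ge> -2"
  then have a: "0 \<le> 1 + x/2" by simp
  have b: "1 + x/2 \<le> exp (x/2)" by (rule exp_ge_add_one_self)
  have "(1 + x/2)^2 \<le> (exp (x/2))^2" by (rule power_mono[OF b a])
  also have "\<dots> = exp x" by (simp add: power2_eq_square mult_exp_exp)
  finally show ?thesis .
qed

lemma ff_local:
  assumes S2: "S2 \<ge> 1" and sg: "\<sigma> \<ge> 0" and d: "\<bar>d\<bar> \<le> 1"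
  shows "ff S2 Q (\<sigma> + d) \<ge> ff S2 Q \<sigma> + ff S2 Q \<sigma> * clamp S2 \<sigma> * d
           + (if \<sigma> = 0 then ff S2 Q \<sigma> / (4*S2) else ff S2 Q \<sigma> * (clamp S2 \<sigma>)^2 / 4) * d^2"
proof -
  have S2p: "S2 > 0" using S2 by simp
  define F where "F = ff S2 Q \<sigma>"
  define c where "c = clamp S2 \<sigma>"
  have F: "F > 0" unfolding F_def by (rule ff_pos)
  have eq: "ff S2 Q (\<sigma> + d) = F * exp (hv S2 (\<sigma> + d) - hv S2 \<sigma>)"
    unfolding F_def ff_def by (simp add: mult_exp_exp)
  show ?thesis
  proof (cases "\<sigma> = 0")
    case True
    have "\<bar>d\<bar> \<le> S2" using d S2 by linarith
    then have "\<bar>d/(2*S2)\<bar> \<le> 1/2" using S2p by (simp add: abs_divide)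
    then have b: "-1/2 \<le> d/(2*S2)" "d/(2*S2) \<le> 1/2" by linarith+
    have "d * (d/(2*S2)) - (d/(2*S2))^2 * S2 \<le> hv S2 d - S2 * (d/(2*S2) - clamp S2 d)^2"
      by (rule hv_max[OF S2p b])
    moreover have "d * (d/(2*S2)) - (d/(2*S2))^2 * S2 = d^2/(4*S2)" using S2p by (simp add: field_simps power2_eq_square)
    moreover have "S2 * (d/(2*S2) - clamp S2 d)^2 \<ge> 0" using S2p by simp
    ultimately have h: "hv S2 d \<ge> d^2/(4*S2)" by linarith
    have "hv S2 0 = 0" by (simp add: hv_def)
    then have "ff S2 Q (\<sigma> + d) \<ge> F * (1 + d^2/(4*S2))" unfolding eq using True F h
      by (intro mult_left_mono) (auto intro: order_trans[OF _ exp_ge_add_one_self])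
    have "c = 0" using True c_def by simp
    then show ?thesis using True \<open>ff S2 Q (\<sigma> + d) \<ge> F * (1 + d^2/(4*S2))\<close> unfolding F_def[symmetric] c_def[symmetric] by (simp add: field_simps)
  next
    case False
    have ca: "\<bar>c\<bar> \<le> 1/2" unfolding c_def using clamp_bounds[of S2 \<sigma>] by auto
    have "\<bar>c\<bar> * \<bar>d\<bar> \<le> (1/2) * 1" using ca d by (intro mult_mono) auto
    then have cb: "\<bar>c * d\<bar> \<le> 1/2" by (simp add: abs_mult)
    have "exp (hv S2 (\<sigma> + d) - hv S2 \<sigma>) \<ge> exp (c * d)" using hv_grad[OF S2p, where \<tau>="\<sigma>+d" and \<sigma>=\<sigma>] unfolding c_def by simp
    moreover have "exp (c*d) \<ge> (1 + c*d/2)^2" using cb by (intro exp_sq_lower) auto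
    ultimately have "exp (hv S2 (\<sigma> + d) - hv S2 \<sigma>) \<ge> (1 + c*d/2)^2" by linarith
    then have "ff S2 Q (\<sigma> + d) \<ge> F * (1 + c*d/2)^2" unfolding eq using F by (intro mult_left_mono) auto
    then show ?thesis using False unfolding F_def[symmetric] c_def[symmetric] by (simp add: power2_eq_square algebra_simps)
  qed
qed


definition mstrong :: "real \<Rightarrow> real \<Rightarrow> real \<Rightarrow> real" where
  "mstrong S2 Q \<sigma> = (if \<sigma> = 0 then ff S2 Q \<sigma> / (4*S2) else ff S2 Q \<sigma> * (clamp S2 \<sigma>)^2 / 4)"

lemma mstrong_pos: "S2 > 0 \<Longrightarrow> \<sigma> \<ge> 0 \<Longrightarrow> mstrong S2 Q \<sigma> > 0"
  unfolding mstrong_def using ff_pos[of S2 Q \<sigma>] clamp_pos[of S2 \<sigma>] by auto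

lemma ff_strong:
  assumes S2: "S2 \<ge> 1" and sg: "\<sigma> \<ge> 0"
  shows "ff S2 Q (\<sigma> + d) \<ge> ff S2 Q \<sigma> + ff S2 Q \<sigma> * clamp S2 \<sigma> * d + mstrong S2 Q \<sigma> * min (d^2) \<bar>d\<bar>"
proof -
  have S2p: "S2 > 0" using S2 by simp
  define F where "F = ff S2 Q \<sigma>"
  define c where "c = clamp S2 \<sigma>"
  define m where "m = mstrong S2 Q \<sigma>"
  have m: "m > 0" unfolding m_def using mstrong_pos[OF S2p sg] .
  have loc: "\<And>d. \<bar>d\<bar> \<le> 1 \<Longrightarrow> ff S2 Q (\<sigma> + d) \<ge> F + F*c*d + m*d^2"
    using ff_local[OF S2 sg] unfolding F_def c_def m_def mstrong_def by blast
  consider "\<bar>d\<bar> \<le> 1" | "d > 1" | "d < -1" by linarith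
  then show ?thesis
  proof cases
    case 1
    then have "min (d^2) \<bar>d\<bar> = d^2"
      by (simp add: min_def power2_eq_square) (metis abs_ge_zero abs_mult_self_eq mult_left_le_one_le)
    then show ?thesis using loc[OF 1] unfolding F_def c_def m_def by simp
  next
    case 2
    define G1 where "G1 = ff S2 Q (\<sigma> + 1)"
    define c1 where "c1 = clamp S2 (\<sigma> + 1)"
    have g1: "G1 \<ge> F + F*c + m" using loc[of 1] unfolding G1_def by simp
    have "F \<ge> G1 + G1 * c1 * (\<sigma> - (\<sigma> + 1))" unfolding F_def G1_def c1_def by (rule ff_grad[OF S2p])
    then have gc: "G1 * c1 \<ge> F*c + m" using g1 by simp
    have "ff S2 Q (\<sigma> + d) \<ge> G1 + G1 * c1 * ((\<sigma> + d) - (\<sigma> + 1))" unfolding G1_def c1_def by (rule ff_grad[OF S2p])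
    moreover have "G1 * c1 * (d - 1) \<ge> (F*c + m) * (d - 1)" using gc 2 by (intro mult_right_mono) auto
    ultimately have "ff S2 Q (\<sigma> + d) \<ge> F + F*c*d + m*d" using g1 by (simp add: algebra_simps)
    moreover have "d * d > d * 1" using 2 by (intro mult_strict_left_mono) auto
    then have "min (d^2) \<bar>d\<bar> = d" using 2 by (simp add: min_def power2_eq_square)
    ultimately show ?thesis unfolding F_def c_def m_def by simp
  next
    case 3
    define G2 where "G2 = ff S2 Q (\<sigma> - 1)"
    define c2 where "c2 = clamp S2 (\<sigma> - 1)"
    have g2: "G2 \<ge> F - F*c + m" using loc[of "-1"] unfolding G2_def by simp
    have "F \<ge> G2 + G2 * c2 * (\<sigma> - (\<sigma> - 1))" unfolding F_def G2_def c2_def by (rule ff_grad[OF S2p])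
    then have gc: "G2 * c2 \<le> F*c - m" using g2 by simp
    have "ff S2 Q (\<sigma> + d) \<ge> G2 + G2 * c2 * ((\<sigma> + d) - (\<sigma> - 1))" unfolding G2_def c2_def by (rule ff_grad[OF S2p])
    moreover have "G2 * c2 * (d + 1) \<ge> (F*c - m) * (d + 1)" using gc 3 by (intro mult_right_mono_neg) auto
    ultimately have "ff S2 Q (\<sigma> + d) \<ge> F + F*c*d - m*d" using g2 by (simp add: algebra_simps)
    moreover have "(-d) * (-d) > (-d) * 1" using 3 by (intro mult_strict_left_mono) auto
    then have "min (d^2) \<bar>d\<bar> = -d" using 3 by (simp add: min_def power2_eq_square)
    ultimately show ?thesis unfolding F_def c_def m_def by simp
  qed
qed

lemma psi_upper:
  assumes S: "S \<noteq> 0" "S^2 \<ge> 1" and sg: "\<sigma> \<ge> 0"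
    and r: "r = ff (S^2) Q \<sigma> * clamp (S^2) \<sigma>"
    and r': "\<bar>r' - r\<bar> \<le> mstrong (S^2) Q \<sigma>"
  shows "psi r' S Q \<le> psi r S Q + \<sigma> * (r' - r) + (r' - r)^2 / (4 * mstrong (S^2) Q \<sigma>)"
proof -
  define m where "m = mstrong (S^2) Q \<sigma>"
  define F where "F = ff (S^2) Q \<sigma>"
  have m: "m > 0" unfolding m_def using mstrong_pos[of "S^2" \<sigma> Q] S sg by simp
  have pr: "psi r S Q = \<sigma> * r - F" unfolding F_def by (rule psi_attained[OF S(1) r])
  have "psi r' S Q \<le> \<sigma> * r - F + \<sigma> * (r' - r) + (r' - r)^2 / (4 * m)"
    unfolding psi_def
  proof (rule cSUP_least)
    fix \<tau> :: real
    define d where "d = \<tau> - \<sigma>"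
    define e where "e = r' - r"
    have st: "ff (S^2) Q \<tau> \<ge> F + r * d + m * min (d^2) \<bar>d\<bar>"
      using ff_strong[OF S(2) sg, of Q d] unfolding F_def m_def d_def r by simp
    have q: "d * e - m * min (d^2) \<bar>d\<bar> \<le> e^2 / (4*m)"
    proof (cases "\<bar>d\<bar> \<le> 1")
      case True
      then have "min (d^2) \<bar>d\<bar> = d^2"
        by (simp add: min_def power2_eq_square) (metis abs_ge_zero abs_mult_self_eq mult_left_le_one_le)
      moreover have "0 \<le> (e - 2*m*d)^2" by simp
      then have "4*m*(d * e - m * d^2) \<le> e^2" by (simp add: power2_eq_square algebra_simps)
      ultimately show ?thesis using m by (simp add: field_simps)
    next
      case False
      then have "min (d^2) \<bar>d\<bar> = \<bar>d\<bar>"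
        by (simp add: min_def power2_eq_square) (metis abs_ge_zero abs_mult_self_eq less_eq_real_def linorder_not_le mult_le_cancel_left1)
      moreover have "d * e \<le> \<bar>d\<bar> * m"
      proof -
        have "d * e \<le> \<bar>d\<bar> * \<bar>e\<bar>" by (metis abs_ge_self abs_mult)
        also have "\<dots> \<le> \<bar>d\<bar> * m" using r' unfolding e_def m_def by (intro mult_left_mono) auto
        finally show ?thesis .
      qed
      moreover have "e^2/(4*m) \<ge> 0" using m by simp
      ultimately show ?thesis by (simp add: algebra_simps)
    qed
    have "\<tau> * r' - psi_star \<tau> S Q = \<tau> * r' - ff (S^2) Q \<tau>" using psi_star_ff[OF S(1)] by simp
    also have "\<dots> \<le> \<sigma> * r - F + \<sigma> * (r' - r) + (d * e - m * min (d^2) \<bar>d\<bar>)"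
      using st unfolding d_def e_def by (simp add: algebra_simps)
    also have "\<dots> \<le> \<sigma> * r - F + \<sigma> * (r' - r) + (r' - r)^2 / (4 * m)" using q unfolding e_def by simp
    finally show "\<tau> * r' - psi_star \<tau> S Q \<le> \<sigma> * r - F + \<sigma> * (r' - r) + (r' - r)^2 / (4 * m)" .
  qed simp
  then show ?thesis using pr unfolding m_def by simp
qed

lemma geom_lemma:
  fixes \<theta> x0 h :: "'a::euclidean_space"
  assumes cs: "inner \<theta> x0 = norm \<theta> * norm x0" and r: "norm x0 = r" "r > 0" and h: "norm h \<le> r/2"
  shows "norm \<theta> * norm (x0 + h) - inner \<theta> (x0 + h) \<le> norm \<theta> * (norm h)^2 / r"
proof (cases "\<theta> = 0")
  case True then show ?thesis by simp
next
  case False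
  define \<sigma> where "\<sigma> = norm \<theta>"
  have sp: "\<sigma> > 0" using False \<sigma>_def by simp
  define p where "p = inner \<theta> h / \<sigma>"
  define N where "N = norm (x0 + h)"
  have "norm \<theta> *\<^sub>R x0 = norm x0 *\<^sub>R \<theta>" using cs by (simp only: norm_cauchy_schwarz_eq[symmetric])
  then have eq: "\<sigma> *\<^sub>R x0 = r *\<^sub>R \<theta>" using r unfolding \<sigma>_def by simp
  have xh: "inner x0 h = r * p"
  proof -
    have "\<sigma> * inner x0 h = inner (\<sigma> *\<^sub>R x0) h" by simp
    also have "\<dots> = r * inner \<theta> h" unfolding eq by simp
    finally show ?thesis unfolding p_def using sp by (simp add: field_simps)
  qed
  have pb: "\<bar>p\<bar> \<le> norm h"
    unfolding p_def \<sigma>_def using Cauchy_Schwarz_ineq2[of \<theta> h] sp \<sigma>_def by (simp add: field_simps abs_divide)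
  have "N^2 = inner (x0+h) (x0+h)" unfolding N_def by (simp add: power2_norm_eq_inner)
  also have "\<dots> = inner x0 x0 + 2*inner x0 h + inner h h" by (simp add: inner_add_left inner_add_right inner_commute)
  also have "inner x0 x0 = r^2" using r(1) power2_norm_eq_inner[of x0] by simp
  also have "inner h h = (norm h)^2" by (simp add: power2_norm_eq_inner)
  finally have N2: "N^2 = r^2 + 2*r*p + (norm h)^2" using xh by simp
  have Nlow: "N \<ge> r - norm h" unfolding N_def using norm_triangle_ineq2[of x0 "-h"] r by simp
  have ith: "inner \<theta> (x0 + h) = \<sigma> * (r + p)" using cs r sp unfolding p_def \<sigma>_def by (simp add: inner_add_right field_simps)
  have key: "N - (r + p) \<le> (norm h)^2 / r"
  proof (cases "N - (r + p) \<le> 0")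
    case True moreover have "(norm h)^2 / r \<ge> 0" using r by simp ultimately show ?thesis by linarith
  next
    case False
    have "(N - (r + p)) * (N + (r + p)) = N^2 - (r+p)^2" by (simp add: power2_eq_square algebra_simps)
    also have "\<dots> \<le> (norm h)^2" unfolding N2 by (simp add: power2_eq_square algebra_simps)
    finally have 1: "(N - (r + p)) * (N + (r + p)) \<le> (norm h)^2" .
    have "N + (r + p) \<ge> r" using Nlow pb h by linarith
    then have "(N - (r + p)) * r \<le> (N - (r + p)) * (N + (r + p))" using False by (intro mult_left_mono) auto
    with 1 have "(N - (r + p)) * r \<le> (norm h)^2" by linarith
    then show ?thesis using r by (simp add: field_simps)
  qed
  have "\<sigma> * (N - (r + p)) \<le> \<sigma> * ((norm h)^2 / r)" using key sp by (intro mult_left_mono) auto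
  then have "\<sigma> * N - \<sigma> * (r + p) \<le> \<sigma> * ((norm h)^2 / r)" by (simp add: algebra_simps)
  then show ?thesis unfolding ith N_def \<sigma>_def by simp
qed

lemma phi_deriv:
  fixes \<theta> :: "'a::euclidean_space"
  assumes S: "S \<noteq> 0" "S^2 \<ge> 1"
  shows "((\<lambda>x. psi (norm x) S Q) has_derivative (\<lambda>h. inner \<theta> h)) (at (xmin (S^2) Q \<theta>))"
proof -
  have S2: "S^2 > 0" using S by simp
  define x0 where "x0 = xmin (S^2) Q \<theta>"
  define \<sigma> where "\<sigma> = norm \<theta>"
  define F where "F = ff (S^2) Q \<sigma>"
  define c where "c = clamp (S^2) \<sigma>"
  define r where "r = F * c"
  define m where "m = mstrong (S^2) Q \<sigma>"
  have sg: "\<sigma> \<ge> 0" unfolding \<sigma>_def by simp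
  have m: "m > 0" unfolding m_def by (rule mstrong_pos[OF S2 sg])
  have nx0: "norm x0 = r" unfolding x0_def r_def F_def c_def \<sigma>_def by (rule norm_xmin[OF S2])
  have ix0: "inner \<theta> x0 = \<sigma> * r" unfolding x0_def r_def F_def c_def \<sigma>_def by (rule inner_xmin)
  have px0: "psi (norm x0) S Q = inner \<theta> x0 - F" unfolding x0_def F_def \<sigma>_def by (rule psi_xmin[OF S(1)])
  have r0: "r \<ge> 0" using nx0 by (metis norm_ge_zero)
  define C where "C = 1/(4*m) + \<sigma>/r"
  define \<delta> where "\<delta> = (if \<theta> = 0 then m else min m (r/2))"
  have rpos: "\<theta> \<noteq> 0 \<Longrightarrow> r > 0"
    unfolding r_def F_def c_def using ff_pos clamp_pos[OF S2] \<sigma>_def by simp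
  show ?thesis unfolding x0_def[symmetric]
  proof (rule quad_has_derivative[where d=\<delta> and C=C])
    show "bounded_linear (inner \<theta>)" by (rule bounded_linear_inner_right)
    show "\<delta> > 0" unfolding \<delta>_def using m rpos by auto
    show "C \<ge> 0" unfolding C_def using m r0 sg by simp
    fix y assume y: "norm (y - x0) < \<delta>"
    define h where "h = y - x0"
    have hm: "norm h \<le> m" using y unfolding h_def \<delta>_def by (auto split: if_splits)
    have lo: "psi (norm y) S Q - psi (norm x0) S Q - inner \<theta> (y - x0) \<ge> 0"
      using xmin_lower[OF S(1), where y=y and \<theta>=\<theta> and Q=Q] px0 unfolding F_def \<sigma>_def
      by (simp add: inner_diff_right)
    have nd: "\<bar>norm y - r\<bar> \<le> norm h" unfolding h_def nx0[symmetric] by (rule norm_triangle_ineq3)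
    have rr: "r = ff (S^2) Q \<sigma> * clamp (S^2) \<sigma>" by (simp add: r_def F_def c_def)
    have "\<bar>norm y - r\<bar> \<le> mstrong (S^2) Q \<sigma>" using nd hm unfolding m_def by linarith
    then have pu: "psi (norm y) S Q \<le> psi r S Q + \<sigma> * (norm y - r) + (norm y - r)^2 / (4 * m)"
      unfolding m_def by (rule psi_upper[OF S sg rr])
    have "\<bar>norm y - r\<bar> \<le> \<bar>norm h\<bar>" using nd by simp
    then have sq: "(norm y - r)^2 \<le> (norm h)^2" by (simp only: abs_le_square_iff)
    have g: "\<sigma> * norm y - inner \<theta> y \<le> \<sigma> / r * (norm h)^2"
    proof (cases "\<theta> = 0")
      case True then show ?thesis unfolding \<sigma>_def by simp
    next
      case False
      have hr: "norm h \<le> r/2" using y False unfolding h_def \<delta>_def by auto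
      have "y = x0 + h" unfolding h_def by simp
      then have "\<sigma> * norm y - inner \<theta> y \<le> \<sigma> * (norm h)^2 / r"
        using geom_lemma[of \<theta> x0 r h] ix0 nx0 rpos[OF False] hr unfolding \<sigma>_def by simp
      then show ?thesis by simp
    qed
    have up: "psi (norm y) S Q - psi (norm x0) S Q - inner \<theta> (y - x0) \<le> C * (norm (y - x0))^2"
    proof -
      have "psi (norm y) S Q - psi (norm x0) S Q - inner \<theta> (y - x0)
          \<le> \<sigma> * norm y - inner \<theta> y + (norm y - r)^2 / (4 * m)"
        using pu nx0 ix0 by (simp add: inner_diff_right algebra_simps)
      also have "\<dots> \<le> \<sigma> / r * (norm h)^2 + (norm h)^2 / (4*m)"
      proof -
        have "(norm y - r)^2/(4*m) \<le> (norm h)^2/(4*m)" using sq m by (intro divide_right_mono) auto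
        then show ?thesis using g by simp
      qed
      also have "\<dots> = C * (norm (y - x0))^2" unfolding C_def h_def by (simp add: algebra_simps)
      finally show ?thesis .
    qed
    show "\<bar>psi (norm y) S Q - psi (norm x0) S Q - inner \<theta> (y - x0)\<bar> \<le> C * (norm (y - x0))^2"
      using lo up by simp
  qed
qed

lemma exp_neg_upper: "(y::real) \<ge> 0 \<Longrightarrow> exp (-y) \<le> 1 - y + y^2/2"
proof -
  assume y: "y \<ge> 0"
  define P where "P = 1 + y + y^2/2"
  have P: "P > 0" unfolding P_def using y by (simp add: add_pos_nonneg)
  have Pe: "P \<le> exp y" unfolding P_def by (rule exp_lower_Taylor_quadratic[OF y])
  define z where "z = y^2/2"
  have "(1 + z - y)*(1 + z + y) = (1+z)^2 - y^2" by (simp add: power2_eq_square algebra_simps)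
  also have "\<dots> = 1 + z^2" unfolding z_def by (simp add: power2_eq_square algebra_simps)
  finally have id0: "(1 + z - y)*(1 + z + y) = 1 + z^2" .
  have id: "P * (1 - y + y^2/2) \<ge> 1" using id0 unfolding P_def z_def[symmetric] by (simp add: algebra_simps)
  have "(1 + z - y)*(1 + z + y) > 0" using id0 by (simp add: add_pos_nonneg)
  moreover have "1 + z + y > 0" unfolding z_def using y by (simp add: add_pos_nonneg)
  ultimately have q: "1 - y + y^2/2 > 0" unfolding z_def by (simp add: zero_less_mult_iff)
  have "exp (-y) * exp y = 1" by (simp add: mult_exp_exp)
  moreover have "(1 - y + y^2/2) * exp y \<ge> (1 - y + y^2/2) * P" using Pe q by (intro mult_left_mono) auto
  moreover have "(1 - y + y^2/2) * P \<ge> 1" using id by (simp add: mult.commute)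
  ultimately have "exp (-y) * exp y \<le> (1 - y + y^2/2) * exp y" by linarith
  then show ?thesis by simp
qed

lemma parta_real:
  fixes F c S2 a B :: real
  assumes S2: "S2 \<ge> 4" and F: "F > 0" and c: "c \<ge> 0" "c \<le> 1/2" and a: "a \<ge> 0"
    and Fw: "c < 1/2 \<Longrightarrow> F \<le> exp (S2 * c^2)"
    and B\<delta>: "\<And>\<delta>. \<delta> \<ge> 0 \<Longrightarrow> B \<ge> F - F * exp (-c*\<delta> + \<delta>^2/(4*S2)) - \<delta> * a"
  shows "F*c \<le> max (a + sqrt ((sqrt S2 + 2) * B)) (max (2*a) (4*(sqrt S2 + 2) * B))"
proof (cases "F*c \<le> 2*a")
  case True then show ?thesis by simp
next
  case False
  define S where "S = sqrt S2"
  have S: "S \<ge> 2" unfolding S_def using S2 real_sqrt_le_mono[of 4 S2] by simp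
  have SS: "S^2 = S2" unfolding S_def using S2 by simp
  have a2: "a \<le> F*c/2" using False by simp
  have cp: "c > 0" using False a F c by (cases "c = 0") auto
  define w where "w = S2 * c^2"
  have wp: "w > 0" unfolding w_def using cp S2 by simp
  show ?thesis
  proof (cases "w \<le> 1/4")
    case True
    have c16: "c^2 \<le> 1/16"
    proof -
      have "4 * c^2 \<le> S2 * c^2" using S2 by (intro mult_right_mono) auto
      then show ?thesis using True unfolding w_def by simp
    qed
    have c4: "c \<le> 1/4"
    proof (rule ccontr)
      assume "\<not> c \<le> 1/4"
      then have "(1/4)^2 < c^2" by (intro power_strict_mono) auto
      with c16 show False by (simp add: power2_eq_square)
    qed
    have Fb: "F \<le> 4/3"
    proof -
      have "F \<le> exp w" using Fw c4 unfolding w_def by simp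
      also have "\<dots> \<le> exp (1/4)" using True by simp
      also have "exp (1/4::real) \<le> 4/3"
      proof -
        have "exp (-(1/4::real)) \<ge> 1 + (-(1/4))" by (rule exp_ge_add_one_self)
        then have "exp (1/4::real) * (3/4) \<le> exp (1/4) * exp (-(1/4))" by (intro mult_left_mono) auto
        also have "\<dots> = 1" by (simp add: mult_exp_exp)
        finally show ?thesis by simp
      qed
      finally show ?thesis .
    qed
    have B1: "B \<ge> F - F * exp (-(3*w/4)) - S2*c * a"
    proof -
      have "-c*(S2*c) + (S2*c)^2/(4*S2) = -(3*w/4)" unfolding w_def using S2 by (simp add: field_simps power2_eq_square)
      then show ?thesis using B\<delta>[of "S2*c"] S2 c by simp
    qed
    have e: "exp (-(3*w/4)) \<le> 1 - 3*w/4 + (3*w/4)^2/2" by (rule exp_neg_upper) (use wp in simp)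
    have "S2*c*a \<le> S2*c*(F*c/2)" using a2 S2 c by (intro mult_left_mono) auto
    also have "\<dots> = w*F/2" unfolding w_def by (simp add: power2_eq_square)
    finally have sa: "S2*c*a \<le> w*F/2" .
    have "F * exp (-(3*w/4)) \<le> F * (1 - 3*w/4 + (3*w/4)^2/2)" using e F by (intro mult_left_mono) auto
    then have "B \<ge> F - F * (1 - 3*w/4 + (3*w/4)^2/2) - w*F/2" using B1 sa by linarith
    then have "B \<ge> F * w * (1/4 - 9*w/32)" by (simp add: algebra_simps power2_eq_square)
    moreover have "F * w * (1/4 - 9*w/32) \<ge> F * w * (23/128)" using True F wp by (intro mult_left_mono) auto
    ultimately have B2: "B \<ge> F * w * (23/128)" by linarith
    have "(S+2) * S2 \<ge> 4 * 4" using S S2 by (intro mult_mono) auto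
    then have "(S+2) * S2 * (23/128) \<ge> F" using Fb by simp
    then have "(F*c^2) * ((S+2) * S2 * (23/128)) \<ge> (F*c^2) * F" using F by (intro mult_left_mono) auto
    moreover have "(S+2) * (F * w * (23/128)) = (F*c^2) * ((S+2) * S2 * (23/128))" unfolding w_def by (simp add: algebra_simps)
    moreover have "(F*c^2) * F = (F*c)^2" by (simp add: power2_eq_square)
    ultimately have "(S+2) * (F * w * (23/128)) \<ge> (F*c)^2" by linarith
    moreover have "(S+2) * B \<ge> (S+2) * (F * w * (23/128))" using B2 S by (intro mult_left_mono) auto
    ultimately have "(S+2) * B \<ge> (F*c)^2" by linarith
    then have "sqrt ((S+2)*B) \<ge> F*c" using F c by (metis real_le_rsqrt)
    then show ?thesis unfolding S_def using a by simp
  next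
    case False
    define \<delta> where "\<delta> = 1/(4*c)"
    have d0: "\<delta> \<ge> 0" unfolding \<delta>_def using cp by simp
    have ex: "-c*\<delta> + \<delta>^2/(4*S2) \<le> -(3/16)"
    proof -
      have "\<delta>^2/(4*S2) = 1/(64*w)" unfolding \<delta>_def w_def using cp S2 by (simp add: field_simps power2_eq_square)
      also have "\<dots> \<le> 1/16" using False by (simp add: field_simps)
      finally have q: "\<delta>^2/(4*S2) \<le> 1/16" .
      have cd: "c*\<delta> = 1/4" unfolding \<delta>_def using cp by simp
      show ?thesis using q cd by linarith
    qed
    have "exp (-c*\<delta> + \<delta>^2/(4*S2)) \<le> exp (-(3/16))" using ex by simp
    also have "\<dots> \<le> 1 - 3/16 + (3/16)^2/2" by (rule exp_neg_upper) simp
    finally have e: "exp (-c*\<delta> + \<delta>^2/(4*S2)) \<le> 1 - 3/16 + (3/16)^2/2" .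
    have da: "\<delta> * a \<le> F/8"
    proof -
      have "\<delta> * a \<le> \<delta> * (F*c/2)" using a2 d0 by (intro mult_left_mono) auto
      also have "\<dots> = F/8" unfolding \<delta>_def using cp by simp
      finally show ?thesis .
    qed
    have "F * exp (-c*\<delta> + \<delta>^2/(4*S2)) \<le> F * (1 - 3/16 + (3/16)^2/2)" using e F by (intro mult_left_mono) auto
    then have "B \<ge> F - F * (1 - 3/16 + (3/16)^2/2) - F/8"
      using B\<delta>[OF d0] da by linarith
    moreover have "F - F * (1 - 3/16 + (3/16)^2/2) - F/8 = 23*F/512" by (simp add: power2_eq_square algebra_simps)
    ultimately have B2: "B \<ge> 23*F/512" by linarith
    have "4*(S+2)*B \<ge> 16 * (23*F/512)" using B2 S F by (intro mult_mono) auto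
    moreover have "F*c \<le> F*(1/2)" using c F by (intro mult_left_mono) auto
    ultimately have "4*(S+2)*B \<ge> F*c" using F by linarith
    then show ?thesis unfolding S_def by simp
  qed
qed

lemma hv_interior:
  assumes "S2 > 0" "\<sigma> \<ge> 0" "clamp S2 \<sigma> < 1/2"
  shows "hv S2 \<sigma> = S2 * (clamp S2 \<sigma>)^2"
proof -
  have "\<sigma>/(2*S2) \<ge> 0" using assms by simp
  then have c: "clamp S2 \<sigma> = \<sigma>/(2*S2)" using assms(3) unfolding clamp_def by (auto simp: max_def min_def)
  then have "\<sigma> = 2*S2*clamp S2 \<sigma>" using assms by simp
  then show ?thesis unfolding hv_def by (simp add: power2_eq_square algebra_simps)
qed

lemma part_a:
  fixes g :: "nat \<Rightarrow> 'a::euclidean_space"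
  assumes t: "1 \<le> t"
  shows "norm (alg_x g \<eta> t) \<le>
         max (norm y + sqrt ((alg_S g \<eta> (t - 1) + 2) * bregman (alg_phi g \<eta> t) y (alg_x g \<eta> t)))
             (max (2 * norm y)
                  (4 * (alg_S g \<eta> (t - 1) + 2) * bregman (alg_phi g \<eta> t) y (alg_x g \<eta> t)))"
proof -
  define S where "S = alg_S g \<eta> (t - 1)"
  define S2 where "S2 = alg_S2 g \<eta> (t - 1)"
  define Q where "Q = alg_Q g \<eta> (t - 1)"
  define \<theta> where "\<theta> = alg_theta g \<eta> (t - 1)"
  define \<sigma> where "\<sigma> = norm \<theta>"
  define F where "F = ff S2 Q \<sigma>"
  define c where "c = clamp S2 \<sigma>"
  define a where "a = norm y"
  define B where "B = bregman (alg_phi g \<eta> t) y (alg_x g \<eta> t)"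
  have S2S: "S^2 = S2" unfolding S_def S2_def by (rule alg_S_sq)
  have S2ge: "S2 \<ge> 4" unfolding S2_def by (rule alg_S2_ge)
  have S2p: "S2 > 0" using S2ge by simp
  have Sne: "S \<noteq> 0" unfolding S_def by (rule alg_S_ne)
  have Sdef: "S = sqrt S2" unfolding S_def S2_def alg_S_def ..
  have Q0: "Q \<ge> 0" unfolding Q_def by (rule alg_Q_ge)
  have sg: "\<sigma> \<ge> 0" unfolding \<sigma>_def by simp
  have xt: "alg_x g \<eta> t = xmin S2 Q \<theta>" unfolding S2_def Q_def \<theta>_def by (rule alg_x_eq[OF t])
  have phi: "alg_phi g \<eta> t = (\<lambda>x. psi (norm x) S Q)" unfolding alg_phi_def S_def Q_def by (rule ext) simp
  have der: "((\<lambda>x. psi (norm x) S Q) has_derivative (\<lambda>h. inner \<theta> h)) (at (xmin S2 Q \<theta>))"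
    using phi_deriv[OF Sne, of Q \<theta>] S2S S2ge by simp
  have fd: "frechet_derivative (alg_phi g \<eta> t) (at (alg_x g \<eta> t)) = (\<lambda>h. inner \<theta> h)"
    unfolding phi xt using frechet_derivative_at[OF der] by simp
  have nxt: "norm (alg_x g \<eta> t) = F * c" unfolding xt F_def c_def \<sigma>_def by (rule norm_xmin[OF S2p])
  have pxt: "psi (norm (xmin S2 Q \<theta>)) S Q = inner \<theta> (xmin S2 Q \<theta>) - F"
    using psi_xmin[OF Sne, of Q \<theta>] S2S unfolding F_def \<sigma>_def by simp
  have Beq: "B = psi a S Q + F - inner \<theta> y"
    unfolding B_def bregman_def fd unfolding phi xt a_def using pxt by (simp add: inner_diff_right)
  have F: "F > 0" unfolding F_def by (rule ff_pos)
  have c0: "c \<ge> 0" unfolding c_def by (rule clamp_nonneg[OF S2p sg])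
  have c1: "c \<le> 1/2" unfolding c_def by (rule clamp_bounds)
  have a0: "a \<ge> 0" unfolding a_def by simp
  have Fw: "F \<le> exp (S2 * c^2)" if "c < 1/2"
  proof -
    have "hv S2 \<sigma> = S2 * c^2" unfolding c_def by (rule hv_interior[OF S2p sg]) (use that c_def in simp)
    then show ?thesis unfolding F_def ff_def using Q0 by simp
  qed
  have Bd: "B \<ge> F - F * exp (-c*\<delta> + \<delta>^2/(4*S2)) - \<delta> * a" if d: "\<delta> \<ge> 0" for \<delta>
  proof -
    have p: "psi a S Q \<ge> (\<sigma> - \<delta>) * a - ff S2 Q (\<sigma> - \<delta>)" using psi_ge[OF Sne] S2S by simp
    have i: "inner \<theta> y \<le> \<sigma> * a" unfolding \<sigma>_def a_def by (rule norm_cauchy_schwarz)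
    have "hv S2 (\<sigma> - \<delta>) \<le> hv S2 \<sigma> + c * ((\<sigma> - \<delta>) - \<sigma>) + ((\<sigma> - \<delta>) - \<sigma>)^2 / (4*S2)"
      unfolding c_def by (rule hv_upper[OF S2p])
    then have "hv S2 (\<sigma> - \<delta>) - Q \<le> (hv S2 \<sigma> - Q) + (-c*\<delta> + \<delta>^2/(4*S2))" by (simp add: power2_eq_square algebra_simps)
    then have "ff S2 Q (\<sigma> - \<delta>) \<le> exp ((hv S2 \<sigma> - Q) + (-c*\<delta> + \<delta>^2/(4*S2)))" unfolding ff_def by simp
    also have "\<dots> = F * exp (-c*\<delta> + \<delta>^2/(4*S2))" unfolding F_def ff_def by (simp add: mult_exp_exp)
    finally have "ff S2 Q (\<sigma> - \<delta>) \<le> F * exp (-c*\<delta> + \<delta>^2/(4*S2))" .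
    then show ?thesis unfolding Beq using p i by (simp add: algebra_simps)
  qed
  have "F * c \<le> max (a + sqrt ((sqrt S2 + 2) * B)) (max (2*a) (4*(sqrt S2 + 2) * B))"
    by (rule parta_real[OF S2ge F c0 c1 a0 Fw Bd])
  then show ?thesis unfolding nxt[symmetric] B_def a_def Sdef[symmetric] S_def .
qed

lemma maximal_bdd:
  fixes M :: "'w measure" and Fl :: "nat \<Rightarrow> 'w measure" and Z :: "nat \<Rightarrow> 'w \<Rightarrow> real"
  assumes P: "prob_space M"
    and sub: "\<And>j. sets (Fl j) \<subseteq> sets M" "\<And>j. space (Fl j) = space M"
    and mono: "\<And>j k. j \<le> k \<Longrightarrow> sets (Fl j) \<subseteq> sets (Fl k)"
    and meas: "\<And>j. Z j \<in> borel_measurable (Fl j)"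
    and int: "\<And>j. integrable M (Z j)"
    and nn: "AE \<omega> in M. \<forall>j. Z j \<omega> \<ge> 0"
    and z0: "\<And>\<omega>. \<omega> \<in> space M \<Longrightarrow> Z 0 \<omega> = cz"
    and sup: "\<And>j B. B \<in> sets (Fl j) \<Longrightarrow>
                (\<integral>\<omega>. indicator B \<omega> * Z (Suc j) \<omega> \<partial>M) \<le> (\<integral>\<omega>. indicator B \<omega> * Z j \<omega> \<partial>M)"
  shows "AE \<omega> in M. bdd_above (range (\<lambda>j. Z j \<omega>))"
proof -
  interpret prob_space M by (rule P)
  define A where "A = (\<lambda>(l::real) N. {\<omega> \<in> space M. \<forall>j\<le>N. Z j \<omega> \<le> l})"
  have Aset: "A l N \<in> sets (Fl N)" for l N
  proof -
    have "A l N = (\<Inter>j\<in>{..N}. {\<omega> \<in> space (Fl j). Z j \<omega> \<le> l})"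
      unfolding A_def using sub(2) by auto
    also have "\<dots> \<in> sets (Fl N)"
    proof (rule sets.finite_INT)
      fix j assume "j \<in> {..N}"
      have "{\<omega> \<in> space (Fl j). Z j \<omega> \<le> l} \<in> sets (Fl j)" using meas[of j] by measurable
      then show "{\<omega> \<in> space (Fl j). Z j \<omega> \<le> l} \<in> sets (Fl N)" using mono[of j N] \<open>j \<in> {..N}\<close> by auto
    qed auto
    finally show ?thesis .
  qed
  have AsetM: "A l N \<in> sets M" for l N using Aset sub(1) by blast
  have Asub: "A l N \<subseteq> space M" for l N unfolding A_def by auto
  have Adec: "A l (Suc N) \<subseteq> A l N" for l N unfolding A_def by auto
  have intI: "integrable M (\<lambda>\<omega>. indicator (A l N) \<omega> * Z k \<omega>)" for l N k
    using integrable_mult_indicator[OF AsetM int[of k]] by simp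
  have claim: "l * (1 - measure M (A l N)) + (\<integral>\<omega>. indicator (A l N) \<omega> * Z N \<omega> \<partial>M) \<le> cz"
    if l: "l > 0" for l N
  proof (induction N)
    case 0
    show ?case
    proof (cases "cz \<le> l")
      case True
      then have "A l 0 = space M" unfolding A_def using z0 by auto
      moreover have "(\<integral>\<omega>. indicator (space M) \<omega> * Z 0 \<omega> \<partial>M) = (\<integral>\<omega>. cz \<partial>M)"
        by (rule Bochner_Integration.integral_cong) (auto simp: z0)
      ultimately show ?thesis using prob_space by simp
    next
      case False
      then have "A l 0 = {}" unfolding A_def using z0 by auto
      then show ?thesis using False by simp
    qed
  next
    case (Suc N)
    have s: "(\<integral>\<omega>. indicator (A l N) \<omega> * Z (Suc N) \<omega> \<partial>M) \<le> (\<integral>\<omega>. indicator (A l N) \<omega> * Z N \<omega> \<partial>M)"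
      by (rule sup[OF Aset])
    have pw: "indicator (A l (Suc N)) \<omega> * Z (Suc N) \<omega> + l * (indicator (A l N) \<omega> - indicator (A l (Suc N)) \<omega>)
              \<le> indicator (A l N) \<omega> * Z (Suc N) \<omega>" if "\<omega> \<in> space M" for \<omega>
    proof (cases "\<omega> \<in> A l (Suc N)")
      case True
      then show ?thesis using Adec by (auto simp: indicator_def)
    next
      case False
      show ?thesis
      proof (cases "\<omega> \<in> A l N")
        case True
        then have "Z (Suc N) \<omega> > l" using False that unfolding A_def by (auto simp: le_Suc_eq)
        then show ?thesis using True False by (simp add: indicator_def)
      qed (use False in \<open>simp add: indicator_def\<close>)
    qed
    have int2: "integrable M (\<lambda>\<omega>. indicator (A l (Suc N)) \<omega> * Z (Suc N) \<omega> + l * (indicator (A l N) \<omega> - indicator (A l (Suc N)) \<omega>))"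
      by (intro Bochner_Integration.integrable_add Bochner_Integration.integrable_mult_right
          Bochner_Integration.integrable_diff intI integrable_real_indicator AsetM) (auto simp: less_top[symmetric])
    have "(\<integral>\<omega>. indicator (A l (Suc N)) \<omega> * Z (Suc N) \<omega> + l * (indicator (A l N) \<omega> - indicator (A l (Suc N)) \<omega>) \<partial>M)
          \<le> (\<integral>\<omega>. indicator (A l N) \<omega> * Z (Suc N) \<omega> \<partial>M)"
      by (rule integral_mono[OF int2 intI pw])
    moreover have "(\<integral>\<omega>. indicator (A l (Suc N)) \<omega> * Z (Suc N) \<omega> + l * (indicator (A l N) \<omega> - indicator (A l (Suc N)) \<omega>) \<partial>M)
          = (\<integral>\<omega>. indicator (A l (Suc N)) \<omega> * Z (Suc N) \<omega> \<partial>M) + l * (measure M (A l N) - measure M (A l (Suc N)))"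
    proof -
      have ii: "integrable M (indicat_real (A l K))" for K
        by (rule integrable_real_indicator) (auto simp: AsetM less_top[symmetric])
      have "(\<integral>\<omega>. l * (indicator (A l N) \<omega> - indicator (A l (Suc N)) \<omega>) \<partial>M)
           = l * ((\<integral>\<omega>. indicator (A l N) \<omega> \<partial>M) - (\<integral>\<omega>. indicator (A l (Suc N)) \<omega> \<partial>M))"
        by (simp add: Bochner_Integration.integral_diff[OF ii ii])
      also have "\<dots> = l * (measure M (A l N) - measure M (A l (Suc N)))"
        using Asub by (simp add: Int_absorb2)
      finally have e: "(\<integral>\<omega>. l * (indicator (A l N) \<omega> - indicator (A l (Suc N)) \<omega>) \<partial>M)
           = l * (measure M (A l N) - measure M (A l (Suc N)))" .
      show ?thesis
        by (subst Bochner_Integration.integral_add) (use intI ii e in \<open>auto intro!: Bochner_Integration.integrable_mult_right Bochner_Integration.integrable_diff\<close>)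
    qed
    ultimately show ?case using Suc s by (simp add: algebra_simps)
  qed
  have mb: "measure M (space M - A l N) \<le> cz / l" if l: "l > 0" for l N
  proof -
    have "(\<integral>\<omega>. indicator (A l N) \<omega> * Z N \<omega> \<partial>M) \<ge> 0"
      by (rule integral_nonneg_AE) (use nn in \<open>auto simp: indicator_def\<close>)
    then have "l * (1 - measure M (A l N)) \<le> cz" using claim[OF l, of N] by linarith
    moreover have "measure M (space M - A l N) = 1 - measure M (A l N)"
      using prob_compl[OF AsetM] by simp
    ultimately have "l * measure M (space M - A l N) \<le> cz" by simp
    then show ?thesis using l by (subst pos_le_divide_eq) (auto simp: mult.commute)
  qed
  define D where "D = (\<lambda>l. \<Union>N. space M - A l N)"
  have Dset: "D l \<in> sets M" for l unfolding D_def using AsetM by auto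
  have Dm: "measure M (D l) \<le> cz / l" if l: "l > 0" for l
  proof -
    have inc: "incseq (\<lambda>N. space M - A l N)"
      by (rule incseq_SucI) (use Adec in auto)
    have "(\<lambda>N. measure M (space M - A l N)) \<longlonglongrightarrow> measure M (\<Union>N. space M - A l N)"
      by (rule finite_Lim_measure_incseq) (use AsetM inc in auto)
    then show ?thesis unfolding D_def by (rule LIMSEQ_le_const2) (use mb[OF l] in auto)
  qed
  define W where "W = (\<Inter>k::nat. D (real (Suc k)))"
  have Wset: "W \<in> sets M" unfolding W_def using Dset by auto
  have Wm: "measure M W \<le> cz / real (Suc k)" for k
  proof -
    have "measure M W \<le> measure M (D (real (Suc k)))" unfolding W_def
      by (rule finite_measure_mono) (use Dset in auto)
    also have "\<dots> \<le> cz / real (Suc k)" by (rule Dm) simp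
    finally show ?thesis .
  qed
  have W0: "measure M W = 0"
  proof (rule ccontr)
    assume "measure M W \<noteq> 0"
    then have pos: "measure M W > 0" using measure_nonneg[of M W] by linarith
    obtain k :: nat where k: "cz / measure M W < real k" using reals_Archimedean2 by blast
    have "cz < real k * measure M W" using k pos by (simp add: field_simps)
    also have "\<dots> \<le> real (Suc k) * measure M W" using pos by (intro mult_right_mono) auto
    finally have "cz / real (Suc k) < measure M W" by (simp add: field_simps)
    with Wm[of k] show False by linarith
  qed
  have Wnull: "W \<in> null_sets M"
    using Wset W0 emeasure_eq_measure[of W] by (simp add: null_sets_def)
  show ?thesis
  proof (rule AE_I'[OF Wnull], safe)
    fix \<omega> assume \<omega>: "\<omega> \<in> space M" and nb: "\<not> bdd_above (range (\<lambda>j. Z j \<omega>))"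
    show "\<omega> \<in> W" unfolding W_def D_def
    proof (safe)
      fix k :: nat
      have "\<exists>j. Z j \<omega> > real (Suc k)"
      proof (rule ccontr)
        assume "\<not> (\<exists>j. Z j \<omega> > real (Suc k))"
        then have "\<forall>j. Z j \<omega> \<le> real (Suc k)" by (simp add: not_less)
        then have "bdd_above (range (\<lambda>j. Z j \<omega>))" by (intro bdd_aboveI2) auto
        with nb show False by simp
      qed
      then obtain j where "Z j \<omega> > real (Suc k)" by blast
      then have "\<omega> \<notin> A (real (Suc k)) j" unfolding A_def by auto
      then show "\<omega> \<in> (\<Union>N. space M - A (real (Suc k)) N)" using \<omega> by blast
    qed
  qed
qed

lemma hv_mono:
  assumes "0 < S2" "S2 \<le> S2'"
  shows "hv S2' \<sigma> \<le> hv S2 \<sigma>"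
proof -
  have "\<sigma> * clamp S2' \<sigma> - (clamp S2' \<sigma>)^2 * S2 \<le> hv S2 \<sigma> - S2 * (clamp S2' \<sigma> - clamp S2 \<sigma>)^2"
    by (rule hv_max[OF assms(1) clamp_bounds])
  moreover have "S2 * (clamp S2' \<sigma> - clamp S2 \<sigma>)^2 \<ge> 0" using assms by simp
  moreover have "(clamp S2' \<sigma>)^2 * S2 \<le> (clamp S2' \<sigma>)^2 * S2'" using assms by (intro mult_left_mono) auto
  ultimately show ?thesis unfolding hv_def[of S2'] by linarith
qed

lemma ff_mono:
  assumes "0 < S2" "S2 \<le> S2'" "Q \<le> Q'"
  shows "ff S2' Q' \<sigma> \<le> ff S2 Q \<sigma>"
  unfolding ff_def using hv_mono[OF assms(1,2), of \<sigma>] assms(3) by simp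

lemma exp_quad:
  assumes "\<bar>x::real\<bar> \<le> 9/16"
  shows "exp x \<le> 1 + x + (8/7) * x^2"
proof -
  obtain t where t: "\<bar>t\<bar> \<le> \<bar>x\<bar>" "exp x = (\<Sum>m<2. x^m / fact m) + exp t / fact 2 * x^2"
    using Maclaurin_exp_le[of x 2] by blast
  have s: "(\<Sum>m<2. x^m / fact m) = 1 + x" by (simp add: numeral_2_eq_2)
  have "exp t \<le> exp (9/16)" using t(1) assms by simp
  also have "exp (9/16::real) \<le> 16/7"
  proof -
    have "exp (-(9/16::real)) \<ge> 1 + (-(9/16))" by (rule exp_ge_add_one_self)
    then have "exp (9/16::real) * (7/16) \<le> exp (9/16) * exp (-(9/16))" by (intro mult_left_mono) auto
    also have "\<dots> = 1" by (simp add: mult_exp_exp)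
    finally show ?thesis by simp
  qed
  finally have "exp t / fact 2 \<le> 8/7" by simp
  then have "exp t / fact 2 * x^2 \<le> 8/7 * x^2" by (intro mult_right_mono) auto
  then show ?thesis using t(2) s by simp
qed

lemma exp_half_sq: "(\<sigma>::real) \<ge> 0 \<Longrightarrow> exp (\<sigma>/2) \<ge> \<sigma>^2/16"
proof -
  assume s: "\<sigma> \<ge> 0"
  have "exp (\<sigma>/2) = (exp (\<sigma>/4))^2" by (simp add: power2_eq_square mult_exp_exp)
  also have "\<dots> \<ge> (1 + \<sigma>/4)^2" by (rule power_mono) (use s in \<open>auto intro: exp_ge_add_one_self\<close>)
  also have "(1 + \<sigma>/4)^2 \<ge> \<sigma>^2/16" using s by (simp add: power2_eq_square algebra_simps)
  finally show ?thesis .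
qed

definition Psi :: "(nat \<Rightarrow> 'a::euclidean_space) \<Rightarrow> (nat \<Rightarrow> real) \<Rightarrow> nat \<Rightarrow> real" where
  "Psi g \<eta> n = ff (alg_S2 g \<eta> n) (alg_Q g \<eta> n) (norm (alg_theta g \<eta> n))"

definition Vp :: "'a \<Rightarrow> real \<Rightarrow> (nat \<Rightarrow> 'a::euclidean_space) \<Rightarrow> (nat \<Rightarrow> real) \<Rightarrow> nat \<Rightarrow> real" where
  "Vp xs K g \<eta> n = Psi g \<eta> n - inner (alg_theta g \<eta> n) xs + K"

definition Ac :: "real \<Rightarrow> real" where "Ac \<gamma> = exp (-1 - \<gamma>/2) / 64"

definition Kc :: "real \<Rightarrow> real \<Rightarrow> real" where "Kc \<gamma> m = m^2 / (4 * Ac \<gamma>) + 2 * m"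

lemma alg_x_Suc: "alg_x g \<eta> (Suc n) = Psi g \<eta> n *\<^sub>R bvec (alg_S2 g \<eta> n) (alg_theta g \<eta> n)"
  using alg_x_eq[of "Suc n" g \<eta>] unfolding xmin_def Psi_def by simp

lemma norm_alg_x_Suc: "norm (alg_x g \<eta> (Suc n)) \<le> Psi g \<eta> n / 2"
proof -
  have S2: "alg_S2 g \<eta> n > 0" using alg_S2_ge[of g \<eta> n] by linarith
  have "norm (alg_x g \<eta> (Suc n)) = Psi g \<eta> n * clamp (alg_S2 g \<eta> n) (norm (alg_theta g \<eta> n))"
  proof -
    have "Psi g \<eta> n > 0" unfolding Psi_def by (rule ff_pos)
    then show ?thesis unfolding alg_x_Suc using norm_bvec[OF S2] by simp
  qed
  also have "\<dots> \<le> Psi g \<eta> n * (1/2)" using ff_pos clamp_bounds unfolding Psi_def by (intro mult_left_mono) (auto intro: less_imp_le)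
  finally show ?thesis by simp
qed

lemma V_lower:
  fixes g :: "nat \<Rightarrow> 'a::euclidean_space"
  assumes S: "alg_S2 g \<eta> n \<le> 4 + \<gamma>" and Q: "alg_Q g \<eta> n \<le> \<gamma>/4"
  shows "Vp xs (Kc \<gamma> (norm xs)) g \<eta> n \<ge> 3/4 * Psi g \<eta> n + 2 * norm xs"
proof -
  define \<sigma> where "\<sigma> = norm (alg_theta g \<eta> n)"
  define m where "m = norm xs"
  define A where "A = Ac \<gamma>"
  have A: "A > 0" unfolding A_def Ac_def by simp
  have S2: "alg_S2 g \<eta> n > 0" using alg_S2_ge[of g \<eta> n] by linarith
  have sg: "\<sigma> \<ge> 0" unfolding \<sigma>_def by simp
  have "Psi g \<eta> n \<ge> exp (\<sigma>/2 - alg_S2 g \<eta> n/4 - alg_Q g \<eta> n)"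
    unfolding Psi_def ff_def \<sigma>_def using hv_lower[OF S2, of "norm (alg_theta g \<eta> n)"] by simp
  also have "exp (\<sigma>/2 - alg_S2 g \<eta> n/4 - alg_Q g \<eta> n) \<ge> exp (-1 - \<gamma>/2) * exp (\<sigma>/2)"
    using S Q by (simp add: mult_exp_exp)
  finally have "Psi g \<eta> n \<ge> exp (-1 - \<gamma>/2) * exp (\<sigma>/2)" .
  moreover have "exp (-1 - \<gamma>/2) * exp (\<sigma>/2) \<ge> exp (-1 - \<gamma>/2) * (\<sigma>^2/16)"
    using exp_half_sq[OF sg] by (intro mult_left_mono) auto
  ultimately have "Psi g \<eta> n \<ge> exp (-1 - \<gamma>/2) * (\<sigma>^2/16)" by linarith
  then have P: "Psi g \<eta> n / 4 \<ge> A * \<sigma>^2" unfolding A_def Ac_def by (simp add: mult.commute)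
  have i: "inner (alg_theta g \<eta> n) xs \<le> \<sigma> * m" unfolding \<sigma>_def m_def by (rule norm_cauchy_schwarz)
  have q: "A * \<sigma>^2 - \<sigma> * m + m^2/(4*A) \<ge> 0"
  proof -
    have e1: "4*A*(m^2/(4*A)) = m^2" using A by simp
    have "4*A*(A * \<sigma>^2 - \<sigma> * m + m^2/(4*A)) = 4*A*(A * \<sigma>^2) - 4*A*(\<sigma> * m) + 4*A*(m^2/(4*A))"
      by (simp add: algebra_simps)
    also have "\<dots> = (2*A*\<sigma> - m)^2" unfolding e1 by (simp add: power2_eq_square algebra_simps)
    finally have "0 \<le> 4*A*(A * \<sigma>^2 - \<sigma> * m + m^2/(4*A))" by simp
    then show ?thesis using A by (simp add: zero_le_mult_iff)
  qed
  show ?thesis unfolding Vp_def Kc_def m_def[symmetric] A_def[symmetric] using P i q by linarith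
qed

lemma z_ineq:
  fixes V V' N sg :: real
  assumes V: "V \<ge> 0" and sg: "0 \<le> sg" "sg \<le> 1"
    and step: "V' \<le> V * (1 + sg^2) - N" and Nb: "\<bar>N\<bar> \<le> 2/3 * sg * V"
  shows "V' * exp (-3 * sg^2) \<le> V - N"
proof -
  define u where "u = sg^2"
  define p where "p = exp (-3 * u)"
  have u: "u \<ge> 0" "u \<le> sg" unfolding u_def using sg by (auto simp: power2_eq_square mult_left_le_one_le)
  have p0: "p > 0" unfolding p_def by simp
  have p1: "p \<le> 1" unfolding p_def using u by simp
  have pb: "p * (1 + 3*u) \<le> 1"
  proof -
    have "1 + 3*u \<le> exp (3*u)" by (rule exp_ge_add_one_self)
    then have "p * (1 + 3*u) \<le> p * exp (3*u)" using p0 by (intro mult_left_mono) auto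
    also have "\<dots> = 1" unfolding p_def by (simp add: mult_exp_exp)
    finally show ?thesis .
  qed
  have "V' * p \<le> (V * (1 + u) - N) * p" using step p0 unfolding u_def by (intro mult_right_mono) auto
  also have "\<dots> = V - N + (V * ((1+u)*p - 1) + N * (1 - p))" by (simp add: algebra_simps)
  also have "\<dots> \<le> V - N"
  proof -
    have "N * (1 - p) \<le> \<bar>N\<bar> * (1 - p)" using p1 by (intro mult_right_mono) auto
    also have "\<dots> \<le> (2/3 * sg * V) * (1 - p)" using Nb p1 by (intro mult_right_mono) auto
    finally have a: "N * (1 - p) \<le> (2/3 * sg * V) * (1 - p)" .
    have br: "((1+u)*p - 1) + (1 - p) * sg * (2/3) \<le> 0"
    proof -
      have c: "1 + u - 2/3* sg \<ge> 0" using sg u by linarith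
      have "(1 + u - 2/3* sg) * p * (1 + 3*u) \<le> (1 + u - 2/3* sg) * 1"
        using pb c by (metis mult.assoc mult_left_mono)
      moreover have "(1 + u - 2/3* sg) * 1 \<le> (1 - 2/3* sg) * (1 + 3*u)"
      proof -
        have e: "(1 - 2/3* sg) * (1 + 3*u) = 1 + u - 2/3* sg + 2*u*(1 - sg)" by (simp add: algebra_simps)
        have "2*u*(1 - sg) \<ge> 0" using sg u by simp
        then show ?thesis unfolding e by simp
      qed
      ultimately have "(1 + u - 2/3* sg) * p * (1 + 3*u) \<le> (1 - 2/3* sg) * (1 + 3*u)" by linarith
      then have h: "(1 + u - 2/3* sg) * p \<le> 1 - 2/3* sg" using u by (simp add: mult_le_cancel_right)
      have "((1+u)*p - 1) + (1 - p) * sg * (2/3) = (1 + u - 2/3* sg) * p - (1 - 2/3* sg)" by (simp add: field_simps)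
      then show ?thesis using h by linarith
    qed
    have "V * ((1+u)*p - 1) + N * (1 - p) \<le> V * ((1+u)*p - 1) + (2/3 * sg * V) * (1 - p)" using a by simp
    also have "\<dots> = V * (((1+u)*p - 1) + (1 - p) * sg * (2/3))" by (simp add: algebra_simps)
    also have "\<dots> \<le> 0" using V br by (simp add: mult_nonneg_nonpos)
    finally show ?thesis by simp
  qed
  finally show ?thesis unfolding p_def u_def .
qed

lemma det_step:
  fixes g :: "nat \<Rightarrow> 'a::euclidean_space"
  assumes l1: "norm (\<eta> (Suc n) *\<^sub>R g (Suc n)) \<le> 1"
    and H: "Vp xs K g \<eta> n \<ge> 3/4 * Psi g \<eta> n + 2 * norm xs"
  shows "Vp xs K g \<eta> (Suc n) * exp (-3 * (norm (\<eta> (Suc n) *\<^sub>R g (Suc n)))^2)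
         \<le> Vp xs K g \<eta> n - inner (\<eta> (Suc n) *\<^sub>R g (Suc n)) (alg_x g \<eta> (Suc n) - xs)"
proof -
  define l where "l = \<eta> (Suc n) *\<^sub>R g (Suc n)"
  define s where "s = norm l"
  define u where "u = s^2"
  define S2 where "S2 = alg_S2 g \<eta> n"
  define Q where "Q = alg_Q g \<eta> n"
  define \<theta> where "\<theta> = alg_theta g \<eta> n"
  define P where "P = Psi g \<eta> n"
  define b where "b = bvec S2 \<theta>"
  define x where "x = alg_x g \<eta> (Suc n)"
  define V where "V = Vp xs K g \<eta> n"
  define m where "m = norm xs"
  have S2g: "S2 \<ge> 4" unfolding S2_def by (rule alg_S2_ge)
  have S2p: "S2 > 0" using S2g by simp
  have s1: "s \<le> 1" "s \<ge> 0" using l1 unfolding s_def l_def by auto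
  have Pp: "P > 0" unfolding P_def Psi_def by (rule ff_pos)
  have xe: "x = P *\<^sub>R b" unfolding x_def P_def b_def S2_def \<theta>_def by (rule alg_x_Suc)
  have nb: "norm b \<le> 1/2" unfolding b_def using norm_bvec[OF S2p] clamp_bounds by metis
  have S2s: "alg_S2 g \<eta> (Suc n) = S2 + u" unfolding S2_def u_def s_def l_def by simp
  have Qs: "alg_Q g \<eta> (Suc n) \<ge> Q"
  proof -
    have "alg_S2 g \<eta> (Suc n) > 0" using alg_S2_ge[of g \<eta> "Suc n"] by linarith
    then show ?thesis unfolding Q_def by (simp del: alg_S2.simps)
  qed
  have ts: "alg_theta g \<eta> (Suc n) = \<theta> - l" unfolding \<theta>_def l_def by simp
  have "Psi g \<eta> (Suc n) \<le> ff S2 Q (norm (\<theta> - l))"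
    unfolding Psi_def ts S2s by (rule ff_mono[OF S2p _ Qs]) (simp add: u_def)
  also have "\<dots> \<le> exp (hv S2 (norm \<theta>) - inner l b + u/(4*S2) - Q)"
    unfolding ff_def b_def u_def s_def using vec_step[OF S2p, of \<theta> l] by simp
  also have "\<dots> = P * exp (- inner l b + u/(4*S2))"
    unfolding P_def Psi_def ff_def S2_def Q_def \<theta>_def by (simp add: mult_exp_exp)
  finally have Ps1: "Psi g \<eta> (Suc n) \<le> P * exp (- inner l b + u/(4*S2))" .
  define y where "y = - inner l b + u/(4*S2)"
  have ib: "\<bar>inner l b\<bar> \<le> s/2"
  proof -
    have "\<bar>inner l b\<bar> \<le> s * norm b" unfolding s_def by (rule Cauchy_Schwarz_ineq2)
    also have "\<dots> \<le> s * (1/2)" using nb s1 by (intro mult_left_mono) auto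
    finally show ?thesis by simp
  qed
  have us: "u \<le> s" unfolding u_def using s1 by (simp add: power2_eq_square mult_left_le_one_le)
  have u0: "u \<ge> 0" unfolding u_def by simp
  have uq: "u/(4*S2) \<le> u/16" using S2g u0 by (intro divide_left_mono) auto
  have uq0: "u/(4*S2) \<ge> 0" using S2p u0 by simp
  have ya: "\<bar>y\<bar> \<le> 9/16 * s" unfolding y_def using ib uq uq0 us by linarith
  then have y916: "\<bar>y\<bar> \<le> 9/16" using s1 by linarith
  have y2: "y^2 \<le> 81/256 * u"
  proof -
    have "y^2 = \<bar>y\<bar>^2" by simp
    also have "\<dots> \<le> (9/16 * s)^2" using ya by (intro power_mono) auto
    finally show ?thesis unfolding u_def by (simp add: power2_eq_square)
  qed
  have "exp y \<le> 1 + y + (8/7) * y^2" by (rule exp_quad[OF y916])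
  also have "\<dots> \<le> 1 - inner l b + u/2" using uq y2 u0 unfolding y_def by linarith
  finally have ey: "exp y \<le> 1 - inner l b + u/2" .
  have Ps2: "Psi g \<eta> (Suc n) \<le> P - inner l x + u*P/2"
  proof -
    have "P * exp y \<le> P * (1 - inner l b + u/2)" using ey Pp by (intro mult_left_mono) auto
    also have "\<dots> = P - inner l x + u*P/2" unfolding xe by (simp add: algebra_simps)
    finally show ?thesis using Ps1 unfolding y_def by simp
  qed
  have V1: "Vp xs K g \<eta> (Suc n) \<le> V - inner l (x - xs) + u*P/2"
    unfolding Vp_def V_def ts using Ps2 unfolding P_def \<theta>_def
    by (simp add: inner_diff_left inner_diff_right algebra_simps)
  have Hm: "V \<ge> 3/4 * P + 2 * m" using H unfolding V_def P_def m_def .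
  have m0: "m \<ge> 0" unfolding m_def by simp
  have V0: "V \<ge> 0" using Hm Pp m0 by linarith
  have uP: "u*P/2 \<le> V * u"
  proof -
    have "P \<le> 4/3 * V" using Hm m0 by linarith
    then have "u * P \<le> u * (4/3 * V)" using u0 by (intro mult_left_mono) auto
    moreover have "u * (4/3 * V) \<le> u * (2 * V)" using u0 V0 by (intro mult_left_mono) auto
    ultimately show ?thesis by (simp add: algebra_simps)
  qed
  have step: "Vp xs K g \<eta> (Suc n) \<le> V * (1 + s^2) - inner l (x - xs)"
    using V1 uP unfolding u_def by (simp add: algebra_simps)
  have Nb: "\<bar>inner l (x - xs)\<bar> \<le> 2/3 * s * V"
  proof -
    have "\<bar>inner l (x - xs)\<bar> \<le> s * norm (x - xs)" unfolding s_def by (rule Cauchy_Schwarz_ineq2)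
    also have "\<dots> \<le> s * (P/2 + m)"
    proof (intro mult_left_mono)
      have "norm (x - xs) \<le> norm x + m" unfolding m_def by (rule norm_triangle_ineq4)
      moreover have "norm x \<le> P/2" unfolding x_def P_def by (rule norm_alg_x_Suc)
      ultimately show "norm (x - xs) \<le> P/2 + m" by linarith
    qed (use s1 in simp)
    also have "\<dots> \<le> s * (2/3 * V)" using Hm s1 m0 by (intro mult_left_mono) auto
    finally show ?thesis by simp
  qed
  show ?thesis using z_ineq[OF V0 s1(2) s1(1) step Nb] unfolding s_def l_def V_def x_def .
qed

lemma gen_sigma_props:
  fixes M :: "'w measure" and fs :: "('w \<Rightarrow> 'a::topological_space) set"
  assumes fm: "\<And>f. f \<in> fs \<Longrightarrow> f \<in> borel_measurable M"
  shows "space (gen_sigma M fs) = space M"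
    and "sets (gen_sigma M fs) \<subseteq> sets M"
    and "\<And>f. f \<in> fs \<Longrightarrow> f \<in> borel_measurable (gen_sigma M fs)"
proof -
  define G where "G = (\<Union>f\<in>fs. {f -` A \<inter> space M | A. A \<in> sets borel})"
  have Gp: "G \<subseteq> Pow (space M)" unfolding G_def by auto
  have GM: "G \<subseteq> sets M" unfolding G_def using fm measurable_sets by blast
  have sp: "space (gen_sigma M fs) = space M" unfolding gen_sigma_def G_def[symmetric]
    using Gp by (rule space_measure_of)
  have st: "sets (gen_sigma M fs) = sigma_sets (space M) G" unfolding gen_sigma_def G_def[symmetric]
    using Gp by (rule sets_measure_of)
  show "space (gen_sigma M fs) = space M" by (rule sp)
  show "sets (gen_sigma M fs) \<subseteq> sets M" unfolding st by (rule sets.sigma_sets_subset[OF GM])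
  fix f assume f: "f \<in> fs"
  show "f \<in> borel_measurable (gen_sigma M fs)"
  proof (rule measurableI)
    fix x assume "x \<in> space (gen_sigma M fs)" then show "f x \<in> space borel" by simp
  next
    fix A :: "'a set" assume "A \<in> sets borel"
    then have "f -` A \<inter> space M \<in> G" unfolding G_def using f by blast
    then show "f -` A \<inter> space (gen_sigma M fs) \<in> sets (gen_sigma M fs)" unfolding sp st by auto
  qed
qed

lemma gen_sigma_mono:
  fixes M :: "'w measure" and fs fs' :: "('w \<Rightarrow> 'a::topological_space) set"
  assumes "fs \<subseteq> fs'"
  shows "sets (gen_sigma M fs) \<subseteq> sets (gen_sigma M fs')"
proof -
  define G where "G = (\<lambda>fs::('w \<Rightarrow> 'a) set. (\<Union>f\<in>fs. {f -` A \<inter> space M | A. A \<in> sets borel}))"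
  have Gp: "G X \<subseteq> Pow (space M)" for X unfolding G_def by auto
  have st: "sets (gen_sigma M X) = sigma_sets (space M) (G X)" for X unfolding gen_sigma_def G_def
    using Gp[of X] unfolding G_def by (rule sets_measure_of)
  show ?thesis unfolding st by (rule sigma_sets_mono) (use assms in \<open>auto simp: G_def\<close>)
qed

lemma alg_meas:
  fixes gw :: "nat \<Rightarrow> 'w \<Rightarrow> 'a::euclidean_space" and \<eta>w :: "nat \<Rightarrow> 'w \<Rightarrow> real"
  assumes g: "\<And>k. 1 \<le> k \<Longrightarrow> k \<le> n \<Longrightarrow> gw k \<in> borel_measurable N"
    and e: "\<And>k. 1 \<le> k \<Longrightarrow> k \<le> n \<Longrightarrow> \<eta>w k \<in> borel_measurable N"
  shows "(\<lambda>\<omega>. alg_theta (\<lambda>s. gw s \<omega>) (\<lambda>s. \<eta>w s \<omega>) n) \<in> borel_measurable N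
       \<and> (\<lambda>\<omega>. alg_S2 (\<lambda>s. gw s \<omega>) (\<lambda>s. \<eta>w s \<omega>) n) \<in> borel_measurable N
       \<and> (\<lambda>\<omega>. alg_Q (\<lambda>s. gw s \<omega>) (\<lambda>s. \<eta>w s \<omega>) n) \<in> borel_measurable N"
  using g e
proof (induction n)
  case 0
  then show ?case by simp
next
  case (Suc n)
  have IH: "(\<lambda>\<omega>. alg_theta (\<lambda>s. gw s \<omega>) (\<lambda>s. \<eta>w s \<omega>) n) \<in> borel_measurable N"
           "(\<lambda>\<omega>. alg_S2 (\<lambda>s. gw s \<omega>) (\<lambda>s. \<eta>w s \<omega>) n) \<in> borel_measurable N"
           "(\<lambda>\<omega>. alg_Q (\<lambda>s. gw s \<omega>) (\<lambda>s. \<eta>w s \<omega>) n) \<in> borel_measurable N"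
    using Suc by auto
  have [measurable]: "gw (Suc n) \<in> borel_measurable N" "\<eta>w (Suc n) \<in> borel_measurable N" using Suc.prems by auto
  note [measurable] = IH
  have s2: "(\<lambda>\<omega>. alg_S2 (\<lambda>s. gw s \<omega>) (\<lambda>s. \<eta>w s \<omega>) (Suc n)) \<in> borel_measurable N" by simp
  show ?case
  proof (intro conjI)
    show "(\<lambda>\<omega>. alg_theta (\<lambda>s. gw s \<omega>) (\<lambda>s. \<eta>w s \<omega>) (Suc n)) \<in> borel_measurable N" by simp
    show "(\<lambda>\<omega>. alg_S2 (\<lambda>s. gw s \<omega>) (\<lambda>s. \<eta>w s \<omega>) (Suc n)) \<in> borel_measurable N" by (rule s2)
    note [measurable] = s2
    show "(\<lambda>\<omega>. alg_Q (\<lambda>s. gw s \<omega>) (\<lambda>s. \<eta>w s \<omega>) (Suc n)) \<in> borel_measurable N"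
      by (subst alg_Q.simps) measurable
  qed
qed

lemma alg_S2_sum: "alg_S2 g \<eta> n = 4 + (\<Sum>k<n. (\<eta> (Suc k))^2 * (norm (g (Suc k)))^2)"
  by (induction n) (auto simp: power_mult_distrib)

lemma alg_Q_le: "alg_Q g \<eta> n \<le> (alg_S2 g \<eta> n - 4) / 4"
proof (induction n)
  case (Suc n)
  define u where "u = (norm (\<eta> (Suc n) *\<^sub>R g (Suc n)))^2"
  have S: "alg_S2 g \<eta> (Suc n) = alg_S2 g \<eta> n + u" unfolding u_def by simp
  have "alg_S2 g \<eta> (Suc n) \<ge> 4" by (rule alg_S2_ge)
  then have "u / alg_S2 g \<eta> (Suc n) \<le> u / 4" unfolding u_def by (intro divide_left_mono) auto
  moreover have "alg_Q g \<eta> (Suc n) = alg_Q g \<eta> n + u / alg_S2 g \<eta> (Suc n)"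
    unfolding u_def by (simp del: alg_S2.simps)
  ultimately show ?case using Suc S by simp
qed simp

lemma theta_bound:
  assumes "\<forall>t\<ge>1. norm (\<eta> t *\<^sub>R g t) \<le> 1"
  shows "norm (alg_theta g \<eta> n) \<le> real n"
proof (induction n)
  case (Suc n)
  have "norm (alg_theta g \<eta> (Suc n)) \<le> norm (alg_theta g \<eta> n) + norm (\<eta> (Suc n) *\<^sub>R g (Suc n))"
    using norm_triangle_ineq4[of "alg_theta g \<eta> n" "\<eta> (Suc n) *\<^sub>R g (Suc n)"] by simp
  also have "\<dots> \<le> real n + 1" using Suc assms by (intro add_mono) auto
  finally show ?case by simp
qed simp

lemma Psi_le: "Psi g \<eta> n \<le> exp (norm (alg_theta g \<eta> n) / 2)"
proof -
  have S2: "alg_S2 g \<eta> n > 0" using alg_S2_ge[of g \<eta> n] by linarith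
  show ?thesis unfolding Psi_def ff_def using hv_le[OF S2, of "norm (alg_theta g \<eta> n)"] alg_Q_ge[of g \<eta> n] by simp
qed

definition Zp :: "'a \<Rightarrow> real \<Rightarrow> (nat \<Rightarrow> 'a::euclidean_space) \<Rightarrow> (nat \<Rightarrow> real) \<Rightarrow> nat \<Rightarrow> real" where
  "Zp xs K g \<eta> n = Vp xs K g \<eta> n * exp (-3 * (alg_S2 g \<eta> n - 4))"

lemma det_all:
  fixes g :: "nat \<Rightarrow> 'a::euclidean_space"
  assumes l1: "\<forall>t\<ge>1. norm (\<eta> t *\<^sub>R g t) \<le> 1"
    and sm: "summable (\<lambda>t. (\<eta> (Suc t))^2 * (norm (g (Suc t)))^2)"
    and sl: "(\<Sum>t. (\<eta> (Suc t))^2 * (norm (g (Suc t)))^2) < \<gamma>"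
  shows "Zp xs (Kc \<gamma> (norm xs)) g \<eta> (Suc n) \<le> Zp xs (Kc \<gamma> (norm xs)) g \<eta> n
            - exp (-3 * (alg_S2 g \<eta> n - 4)) * (\<eta> (Suc n) * inner (g (Suc n)) (alg_x g \<eta> (Suc n) - xs))"
    and "Zp xs (Kc \<gamma> (norm xs)) g \<eta> n \<ge> 0"
    and "norm (alg_x g \<eta> (Suc n)) \<le> Zp xs (Kc \<gamma> (norm xs)) g \<eta> n * exp (3 * \<gamma>)"
    and "Zp xs (Kc \<gamma> (norm xs)) g \<eta> n \<le> exp (real n / 2) + real n * norm xs + Kc \<gamma> (norm xs)"
    and "norm (alg_x g \<eta> (Suc n)) \<le> exp (real n / 2)"
proof -
  define K where "K = Kc \<gamma> (norm xs)"
  have S2b: "alg_S2 g \<eta> k \<le> 4 + \<gamma>" for k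
  proof -
    have "(\<Sum>j<k. (\<eta> (Suc j))^2 * (norm (g (Suc j)))^2) \<le> (\<Sum>t. (\<eta> (Suc t))^2 * (norm (g (Suc t)))^2)"
      by (rule sum_le_suminf[OF sm]) auto
    then show ?thesis unfolding alg_S2_sum using sl by linarith
  qed
  have Qb: "alg_Q g \<eta> k \<le> \<gamma>/4" for k using alg_Q_le[of g \<eta> k] S2b[of k] by simp
  have H: "Vp xs K g \<eta> k \<ge> 3/4 * Psi g \<eta> k + 2 * norm xs" for k
    unfolding K_def by (rule V_lower[OF S2b Qb])
  have Pp: "Psi g \<eta> k > 0" for k unfolding Psi_def by (rule ff_pos)
  have V0: "Vp xs K g \<eta> k \<ge> 0" for k using H[of k] Pp[of k] norm_ge_zero[of xs] by linarith
  have l1': "norm (\<eta> (Suc n) *\<^sub>R g (Suc n)) \<le> 1" using l1 by simp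
  have st: "Vp xs K g \<eta> (Suc n) * exp (-3 * (norm (\<eta> (Suc n) *\<^sub>R g (Suc n)))^2)
         \<le> Vp xs K g \<eta> n - inner (\<eta> (Suc n) *\<^sub>R g (Suc n)) (alg_x g \<eta> (Suc n) - xs)"
    by (rule det_step[OF l1' H])
  define E where "E = exp (-3 * (alg_S2 g \<eta> n - 4))"
  have Ep: "E > 0" unfolding E_def by simp
  have "Zp xs K g \<eta> (Suc n) = (Vp xs K g \<eta> (Suc n) * exp (-3 * (norm (\<eta> (Suc n) *\<^sub>R g (Suc n)))^2)) * E"
    unfolding Zp_def E_def by (simp add: mult_exp_exp algebra_simps)
  also have "\<dots> \<le> (Vp xs K g \<eta> n - inner (\<eta> (Suc n) *\<^sub>R g (Suc n)) (alg_x g \<eta> (Suc n) - xs)) * E"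
    using st Ep by (intro mult_right_mono) auto
  also have "\<dots> = Zp xs K g \<eta> n - E * (\<eta> (Suc n) * inner (g (Suc n)) (alg_x g \<eta> (Suc n) - xs))"
    unfolding Zp_def E_def by (simp add: algebra_simps)
  finally show "Zp xs (Kc \<gamma> (norm xs)) g \<eta> (Suc n) \<le> Zp xs (Kc \<gamma> (norm xs)) g \<eta> n
            - exp (-3 * (alg_S2 g \<eta> n - 4)) * (\<eta> (Suc n) * inner (g (Suc n)) (alg_x g \<eta> (Suc n) - xs))"
    unfolding K_def E_def .
  show Z0: "Zp xs (Kc \<gamma> (norm xs)) g \<eta> n \<ge> 0" unfolding Zp_def K_def[symmetric] using V0[of n] by simp
  have e1: "exp (-3 * (alg_S2 g \<eta> n - 4)) \<le> 1" using alg_S2_ge[of g \<eta> n] by simp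
  have "norm (alg_x g \<eta> (Suc n)) \<le> Vp xs K g \<eta> n"
    using norm_alg_x_Suc[of g \<eta> n] H[of n] Pp[of n] norm_ge_zero[of xs] by linarith
  also have "Vp xs K g \<eta> n = Zp xs K g \<eta> n * exp (3 * (alg_S2 g \<eta> n - 4))"
    unfolding Zp_def by (simp add: mult_exp_exp)
  also have "\<dots> \<le> Zp xs K g \<eta> n * exp (3 * \<gamma>)"
    using S2b[of n] Z0 unfolding K_def by (intro mult_left_mono) auto
  finally show "norm (alg_x g \<eta> (Suc n)) \<le> Zp xs (Kc \<gamma> (norm xs)) g \<eta> n * exp (3 * \<gamma>)" unfolding K_def .
  have tb: "norm (alg_theta g \<eta> n) \<le> real n" by (rule theta_bound[OF l1])
  have Pb: "Psi g \<eta> n \<le> exp (real n / 2)" using Psi_le[of g \<eta> n] tb by (meson divide_right_mono exp_le_cancel_iff order_trans zero_le_numeral)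
  have "Zp xs K g \<eta> n \<le> Vp xs K g \<eta> n" unfolding Zp_def using V0[of n] e1 by (simp add: mult_left_le)
  also have "\<dots> \<le> exp (real n / 2) + real n * norm xs + K"
  proof -
    have "- inner (alg_theta g \<eta> n) xs \<le> norm (alg_theta g \<eta> n) * norm xs"
      using norm_cauchy_schwarz[of "- alg_theta g \<eta> n" xs] by simp
    also have "\<dots> \<le> real n * norm xs" using tb by (intro mult_right_mono) auto
    finally show ?thesis unfolding Vp_def using Pb by linarith
  qed
  finally show "Zp xs (Kc \<gamma> (norm xs)) g \<eta> n \<le> exp (real n / 2) + real n * norm xs + Kc \<gamma> (norm xs)" unfolding K_def .
  show "norm (alg_x g \<eta> (Suc n)) \<le> exp (real n / 2)" using norm_alg_x_Suc[of g \<eta> n] Pb Pp[of n] by linarith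
qed

lemma super_step:
  fixes M Ft :: "'w measure" and Zj Zs E eta :: "'w \<Rightarrow> real"
    and gone xx :: "'w \<Rightarrow> 'a::euclidean_space" and F' :: "'a \<Rightarrow> 'a"
  assumes P: "prob_space M" and sub: "subalgebra M Ft" and B: "B \<in> sets Ft"
    and iZj: "integrable M Zj" and iZs: "integrable M Zs"
    and mE: "E \<in> borel_measurable Ft" and meta: "eta \<in> borel_measurable Ft"
    and mxx: "xx \<in> borel_measurable Ft" and mg: "gone \<in> borel_measurable M"
    and E01: "\<And>\<omega>. \<omega> \<in> space M \<Longrightarrow> 0 \<le> E \<omega> \<and> E \<omega> \<le> 1"
    and eta0: "\<And>\<omega>. \<omega> \<in> space M \<Longrightarrow> eta \<omega> \<ge> 0"
    and etab: "AE \<omega> in M. eta \<omega> \<le> ca" and gb: "AE \<omega> in M. norm (gone \<omega>) \<le> G"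
    and xb: "AE \<omega> in M. norm (xx \<omega>) \<le> cb"
    and vc: "\<And>x. inner (F' x) (x - xs) \<ge> 0" and cF: "continuous_on UNIV F'"
    and ce: "\<And>b. b \<in> Basis \<Longrightarrow> AE \<omega> in M. real_cond_exp M Ft (\<lambda>\<omega>. inner (gone \<omega>) b) \<omega> = inner (F' (xx \<omega>)) b"
    and step: "AE \<omega> in M. Zs \<omega> \<le> Zj \<omega> - E \<omega> * (eta \<omega> * inner (gone \<omega>) (xx \<omega> - xs))"
  shows "(\<integral>\<omega>. indicator B \<omega> * Zs \<omega> \<partial>M) \<le> (\<integral>\<omega>. indicator B \<omega> * Zj \<omega> \<partial>M)"
proof -
  interpret prob_space M by (rule P)
  interpret FS: finite_measure_subalgebra M Ft by unfold_locales (rule sub)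
  have BM: "B \<in> sets M" using B sub unfolding subalgebra_def by blast
  have [measurable]: "E \<in> borel_measurable M" "eta \<in> borel_measurable M" "xx \<in> borel_measurable M"
    using measurable_from_subalg[OF sub] mE meta mxx by auto
  note [measurable] = mg
  have mF': "F' \<in> borel_measurable borel" by (rule borel_measurable_continuous_onI[OF cF])
  have [measurable]: "(\<lambda>\<omega>. F' (xx \<omega>)) \<in> borel_measurable M" using mF' by measurable
  have iB: "indicator B \<in> borel_measurable Ft" using B by simp
  define hb where "hb = (\<lambda>b \<omega>. indicator B \<omega> * E \<omega> * eta \<omega> * inner (xx \<omega> - xs) b)"
  have hbF: "hb b \<in> borel_measurable Ft" for b unfolding hb_def using iB mE meta mxx by measurable
  have hbM[measurable]: "hb b \<in> borel_measurable M" for b using measurable_from_subalg[OF sub hbF] .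
  define c3 where "c3 = \<bar>ca\<bar> * (\<bar>cb\<bar> + norm xs)"
  have hbb: "AE \<omega> in M. \<bar>hb b \<omega>\<bar> \<le> c3" if b: "b \<in> Basis" for b
    using AE_space etab xb
  proof (eventually_elim)
    case (elim \<omega>)
    have a1: "\<bar>indicator B \<omega> * E \<omega>\<bar> \<le> 1" using E01[OF elim(1)] by (auto simp: indicator_def)
    have a2: "\<bar>eta \<omega>\<bar> \<le> \<bar>ca\<bar>" using eta0[OF elim(1)] elim(2) by simp
    have "\<bar>inner (xx \<omega> - xs) b\<bar> \<le> norm (xx \<omega> - xs)" by (rule Basis_le_norm[OF b])
    also have "\<dots> \<le> norm (xx \<omega>) + norm xs" by (rule norm_triangle_ineq4)
    finally have a3: "\<bar>inner (xx \<omega> - xs) b\<bar> \<le> \<bar>cb\<bar> + norm xs" using elim(3) by linarith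
    have "\<bar>hb b \<omega>\<bar> = \<bar>indicator B \<omega> * E \<omega>\<bar> * \<bar>eta \<omega>\<bar> * \<bar>inner (xx \<omega> - xs) b\<bar>"
      unfolding hb_def by (simp add: abs_mult)
    also have "\<dots> \<le> 1 * \<bar>ca\<bar> * (\<bar>cb\<bar> + norm xs)"
      using a1 a2 a3 by (intro mult_mono) auto
    finally show ?case unfolding c3_def by simp
  qed
  have gbb: "AE \<omega> in M. \<bar>inner (gone \<omega>) b\<bar> \<le> G" if b: "b \<in> Basis" for b
    using gb by eventually_elim (use Basis_le_norm[OF b] in \<open>smt (verit)\<close>)
  have int1: "integrable M (\<lambda>\<omega>. hb b \<omega> * inner (gone \<omega>) b)" if b: "b \<in> Basis" for b
  proof (rule integrable_const_bound[where B="c3 * G"])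
    show "AE \<omega> in M. norm (hb b \<omega> * inner (gone \<omega>) b) \<le> c3 * G"
      using hbb[OF b] gbb[OF b]
    proof eventually_elim
      case (elim \<omega>)
      then show ?case by (simp add: abs_mult) (intro mult_mono, auto)
    qed
  qed measurable
  have key: "integrable M (\<lambda>\<omega>. hb b \<omega> * inner (F' (xx \<omega>)) b)
        \<and> (\<integral>\<omega>. hb b \<omega> * inner (F' (xx \<omega>)) b \<partial>M) = (\<integral>\<omega>. hb b \<omega> * inner (gone \<omega>) b \<partial>M)"
    if b: "b \<in> Basis" for b
  proof -
    have gbm: "(\<lambda>\<omega>. inner (gone \<omega>) b) \<in> borel_measurable M" by measurable
    note r = FS.real_cond_exp_intg[OF int1[OF b] hbF gbm]
    have ae: "AE \<omega> in M. hb b \<omega> * real_cond_exp M Ft (\<lambda>\<omega>. inner (gone \<omega>) b) \<omega> = hb b \<omega> * inner (F' (xx \<omega>)) b"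
      using ce[OF b] by eventually_elim simp
    have m2: "(\<lambda>\<omega>. hb b \<omega> * inner (F' (xx \<omega>)) b) \<in> borel_measurable M" by measurable
    have m1: "(\<lambda>\<omega>. hb b \<omega> * real_cond_exp M Ft (\<lambda>\<omega>. inner (gone \<omega>) b) \<omega>) \<in> borel_measurable M" by measurable
    show ?thesis
    proof
      show "integrable M (\<lambda>\<omega>. hb b \<omega> * inner (F' (xx \<omega>)) b)" by (rule integrable_cong_AE_imp[OF r(1) m2 ae])
      have "(\<integral>\<omega>. hb b \<omega> * inner (F' (xx \<omega>)) b \<partial>M) = (\<integral>\<omega>. hb b \<omega> * real_cond_exp M Ft (\<lambda>\<omega>. inner (gone \<omega>) b) \<omega> \<partial>M)"
        by (rule integral_cong_AE[OF m2 m1]) (use ae in \<open>auto elim: AE_mp\<close>)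
      also have "\<dots> = (\<integral>\<omega>. hb b \<omega> * inner (gone \<omega>) b \<partial>M)" by (rule r(2))
      finally show "(\<integral>\<omega>. hb b \<omega> * inner (F' (xx \<omega>)) b \<partial>M) = (\<integral>\<omega>. hb b \<omega> * inner (gone \<omega>) b \<partial>M)" .
    qed
  qed
  define W where "W = (\<lambda>\<omega>. indicator B \<omega> * (E \<omega> * (eta \<omega> * inner (gone \<omega>) (xx \<omega> - xs))))"
  have Wsum: "W \<omega> = (\<Sum>b\<in>Basis. hb b \<omega> * inner (gone \<omega>) b)" for \<omega>
  proof -
    define c where "c = indicator B \<omega> * E \<omega> * eta \<omega>"
    have "W \<omega> = c * inner (gone \<omega>) (xx \<omega> - xs)" unfolding W_def c_def by (simp add: mult.assoc)
    also have "\<dots> = c * (\<Sum>b\<in>Basis. inner (gone \<omega>) b * inner (xx \<omega> - xs) b)"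
      by (subst euclidean_inner) (rule refl)
    also have "\<dots> = (\<Sum>b\<in>Basis. c * (inner (gone \<omega>) b * inner (xx \<omega> - xs) b))" by (rule sum_distrib_left)
    also have "\<dots> = (\<Sum>b\<in>Basis. hb b \<omega> * inner (gone \<omega>) b)"
      by (intro sum.cong refl) (simp add: hb_def c_def mult_ac)
    finally show ?thesis .
  qed
  have Fsum: "indicator B \<omega> * (E \<omega> * (eta \<omega> * inner (F' (xx \<omega>)) (xx \<omega> - xs))) = (\<Sum>b\<in>Basis. hb b \<omega> * inner (F' (xx \<omega>)) b)" for \<omega>
  proof -
    define c where "c = indicator B \<omega> * E \<omega> * eta \<omega>"
    have "indicator B \<omega> * (E \<omega> * (eta \<omega> * inner (F' (xx \<omega>)) (xx \<omega> - xs))) = c * inner (F' (xx \<omega>)) (xx \<omega> - xs)"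
      unfolding c_def by (simp add: mult.assoc)
    also have "\<dots> = c * (\<Sum>b\<in>Basis. inner (F' (xx \<omega>)) b * inner (xx \<omega> - xs) b)"
      by (subst euclidean_inner) (rule refl)
    also have "\<dots> = (\<Sum>b\<in>Basis. c * (inner (F' (xx \<omega>)) b * inner (xx \<omega> - xs) b))" by (rule sum_distrib_left)
    also have "\<dots> = (\<Sum>b\<in>Basis. hb b \<omega> * inner (F' (xx \<omega>)) b)"
      by (intro sum.cong refl) (simp add: hb_def c_def mult_ac)
    finally show ?thesis .
  qed
  have Wint: "integrable M W" unfolding Wsum by (rule Bochner_Integration.integrable_sum) (use int1 in auto)
  have Wpos: "(\<integral>\<omega>. W \<omega> \<partial>M) \<ge> 0"
  proof -
    have "(\<integral>\<omega>. W \<omega> \<partial>M) = (\<Sum>b\<in>Basis. (\<integral>\<omega>. hb b \<omega> * inner (gone \<omega>) b \<partial>M))"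
      unfolding Wsum by (rule Bochner_Integration.integral_sum) (use int1 in auto)
    also have "\<dots> = (\<Sum>b\<in>Basis. (\<integral>\<omega>. hb b \<omega> * inner (F' (xx \<omega>)) b \<partial>M))"
      using key by (intro sum.cong) auto
    also have "\<dots> = (\<integral>\<omega>. (\<Sum>b\<in>Basis. hb b \<omega> * inner (F' (xx \<omega>)) b) \<partial>M)"
      by (rule Bochner_Integration.integral_sum[symmetric]) (use key in auto)
    also have "\<dots> = (\<integral>\<omega>. indicator B \<omega> * (E \<omega> * (eta \<omega> * inner (F' (xx \<omega>)) (xx \<omega> - xs))) \<partial>M)"
      unfolding Fsum ..
    also have "\<dots> \<ge> 0"
    proof (rule integral_nonneg_AE, rule AE_I2)
      fix \<omega> assume "\<omega> \<in> space M"
      then show "0 \<le> indicator B \<omega> * (E \<omega> * (eta \<omega> * inner (F' (xx \<omega>)) (xx \<omega> - xs)))"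
        using E01 eta0 vc by (intro mult_nonneg_nonneg) auto
    qed
    finally show ?thesis .
  qed
  have i1: "integrable M (\<lambda>\<omega>. indicator B \<omega> * Zs \<omega>)" using integrable_mult_indicator[OF BM iZs] by simp
  have i2: "integrable M (\<lambda>\<omega>. indicator B \<omega> * Zj \<omega>)" using integrable_mult_indicator[OF BM iZj] by simp
  have "(\<integral>\<omega>. indicator B \<omega> * Zs \<omega> \<partial>M) \<le> (\<integral>\<omega>. indicator B \<omega> * Zj \<omega> - W \<omega> \<partial>M)"
  proof (rule integral_mono_AE[OF i1 Bochner_Integration.integrable_diff[OF i2 Wint]])
    show "AE \<omega> in M. indicator B \<omega> * Zs \<omega> \<le> indicator B \<omega> * Zj \<omega> - W \<omega>"
      using step
    proof eventually_elim
      case (elim \<omega>)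
      have "indicator B \<omega> * Zs \<omega> \<le> indicator B \<omega> * (Zj \<omega> - E \<omega> * (eta \<omega> * inner (gone \<omega>) (xx \<omega> - xs)))"
        using elim by (intro mult_left_mono) auto
      then show ?case unfolding W_def by (simp add: algebra_simps)
    qed
  qed
  also have "\<dots> = (\<integral>\<omega>. indicator B \<omega> * Zj \<omega> \<partial>M) - (\<integral>\<omega>. W \<omega> \<partial>M)"
    by (rule Bochner_Integration.integral_diff[OF i2 Wint])
  also have "\<dots> \<le> (\<integral>\<omega>. indicator B \<omega> * Zj \<omega> \<partial>M)" using Wpos by simp
  finally show ?thesis .
qed

lemma lemma20_b:
  fixes M :: "'w measure"
    and gw :: "nat \<Rightarrow> 'w \<Rightarrow> 'a::euclidean_space"
    and \<eta>w :: "nat \<Rightarrow> 'w \<Rightarrow> real"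
    and F :: "'a \<Rightarrow> real" and F' :: "'a \<Rightarrow> 'a" and xs :: 'a
    and G \<gamma> :: real
  assumes P: "prob_space M" and Gp: "G > 0" and gp: "\<gamma> > 0"
    and vcoh: "variationally_coherent F F' xs"
    and gm: "\<forall>t\<ge>1. gw t \<in> borel_measurable M"
    and xm: "\<forall>t\<ge>1. rand_x gw \<eta>w t \<in> borel_measurable M"
    and em: "\<forall>t\<ge>1. \<eta>w t \<in> borel_measurable (alg_filtration M gw \<eta>w t)"
    and e0: "\<forall>t\<ge>1. \<forall>w\<in>space M. \<eta>w t w \<ge> 0"
    and ce: "\<forall>t\<ge>1. \<forall>b\<in>Basis. AE w in M.
          real_cond_exp M (alg_filtration M gw \<eta>w t) (\<lambda>w. inner (gw t w) b) w
            = inner (F' (rand_x gw \<eta>w t w)) b"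
    and gb: "AE w in M. \<forall>t\<ge>1. norm (gw t w) \<le> G"
    and sb: "AE w in M.
          summable (\<lambda>t. (\<eta>w (Suc t) w)^2 * (norm (gw (Suc t) w))^2) \<and>
          (\<Sum>t. (\<eta>w (Suc t) w)^2 * (norm (gw (Suc t) w))^2) < \<gamma> \<and>
          \<not> summable (\<lambda>t. \<eta>w (Suc t) w) \<and>
          (\<forall>t\<ge>1. \<eta>w t w \<le> 1 / G)"
  shows "AE w in M. bdd_above ((\<lambda>t. norm (rand_x gw \<eta>w t w)) ` {1..})"
proof -
  interpret prob_space M by (rule P)
  define Fi where "Fi = alg_filtration M gw \<eta>w"
  define fs where "fs = (\<lambda>t. {rand_x gw \<eta>w s | s. 1 \<le> s \<and> s \<le> t} \<union> {gw s | s. 1 \<le> s \<and> s < t})"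
  have Fi_eq: "Fi t = gen_sigma M (fs t)" for t unfolding Fi_def fs_def alg_filtration_def ..
  have fsm: "f \<in> borel_measurable M" if "f \<in> fs t" for f t using that gm xm unfolding fs_def by auto
  have Fsp: "space (Fi t) = space M" for t unfolding Fi_eq by (rule gen_sigma_props(1)) (rule fsm)
  have Fsets: "sets (Fi t) \<subseteq> sets M" for t unfolding Fi_eq by (rule gen_sigma_props(2)) (rule fsm)
  have subalg: "subalgebra M (Fi t)" for t unfolding subalgebra_def using Fsp Fsets by auto
  have Fmono: "sets (Fi s) \<subseteq> sets (Fi t)" if "s \<le> t" for s t
    unfolding Fi_eq by (rule gen_sigma_mono) (use that in \<open>unfold fs_def, fastforce\<close>)
  have lift: "f \<in> borel_measurable (Fi t)" if "f \<in> borel_measurable (Fi s)" "s \<le> t" for f s t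
  proof -
    have "measurable (Fi s) borel \<subseteq> measurable (Fi t) borel"
      by (rule measurable_mono[OF order_refl refl Fmono[OF that(2)]]) (simp add: Fsp)
    then show ?thesis using that(1) by (rule subsetD)
  qed
  have xF: "rand_x gw \<eta>w s \<in> borel_measurable (Fi t)" if "1 \<le> s" "s \<le> t" for s t
    unfolding Fi_eq by (rule gen_sigma_props(3)) (erule fsm, unfold fs_def, use that in blast)
  have gF: "gw s \<in> borel_measurable (Fi t)" if "1 \<le> s" "s < t" for s t
    unfolding Fi_eq by (rule gen_sigma_props(3)) (erule fsm, unfold fs_def, use that in blast)
  have eF: "\<eta>w s \<in> borel_measurable (Fi t)" if "1 \<le> s" "s \<le> t" for s t
  proof -
    have "\<eta>w s \<in> borel_measurable (Fi s)" using em that(1) unfolding Fi_def by blast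
    then show ?thesis by (rule lift[OF _ that(2)])
  qed
  define K where "K = Kc \<gamma> (norm xs)"
  define Z where "Z = (\<lambda>j \<omega>. Zp xs K (\<lambda>s. gw s \<omega>) (\<lambda>s. \<eta>w s \<omega>) j)"
  define Good where "Good = (\<lambda>\<omega>. (\<forall>t\<ge>1. norm (gw t \<omega>) \<le> G) \<and>
          summable (\<lambda>t. (\<eta>w (Suc t) \<omega>)^2 * (norm (gw (Suc t) \<omega>))^2) \<and>
          (\<Sum>t. (\<eta>w (Suc t) \<omega>)^2 * (norm (gw (Suc t) \<omega>))^2) < \<gamma> \<and>
          (\<forall>t\<ge>1. \<eta>w t \<omega> \<le> 1 / G))"
  have AEgood: "AE \<omega> in M. Good \<omega>" using gb sb unfolding Good_def by eventually_elim auto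
  have l1: "\<forall>t\<ge>1. norm (\<eta>w t \<omega> *\<^sub>R gw t \<omega>) \<le> 1" if "\<omega> \<in> space M" "Good \<omega>" for \<omega>
  proof (intro allI impI)
    fix t :: nat assume t: "1 \<le> t"
    have "norm (\<eta>w t \<omega> *\<^sub>R gw t \<omega>) = \<eta>w t \<omega> * norm (gw t \<omega>)" using e0 t that(1) by simp
    also have "\<dots> \<le> (1/G) * G" using that(2) t e0 that(1) Gp unfolding Good_def by (intro mult_mono) auto
    finally show "norm (\<eta>w t \<omega> *\<^sub>R gw t \<omega>) \<le> 1" using Gp by simp
  qed
  have det: "AE \<omega> in M. \<forall>n.
      Z (Suc n) \<omega> \<le> Z n \<omega> - exp (-3 * (alg_S2 (\<lambda>s. gw s \<omega>) (\<lambda>s. \<eta>w s \<omega>) n - 4)) *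
           (\<eta>w (Suc n) \<omega> * inner (gw (Suc n) \<omega>) (rand_x gw \<eta>w (Suc n) \<omega> - xs))
      \<and> Z n \<omega> \<ge> 0
      \<and> norm (rand_x gw \<eta>w (Suc n) \<omega>) \<le> Z n \<omega> * exp (3 * \<gamma>)
      \<and> Z n \<omega> \<le> exp (real n / 2) + real n * norm xs + K
      \<and> norm (rand_x gw \<eta>w (Suc n) \<omega>) \<le> exp (real n / 2)"
    using AE_space AEgood
  proof eventually_elim
    case (elim \<omega>)
    note L = l1[OF elim]
    have sm: "summable (\<lambda>t. (\<eta>w (Suc t) \<omega>)^2 * (norm (gw (Suc t) \<omega>))^2)"
      and sl: "(\<Sum>t. (\<eta>w (Suc t) \<omega>)^2 * (norm (gw (Suc t) \<omega>))^2) < \<gamma>" using elim(2) unfolding Good_def by auto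
    note D = det_all[of "\<lambda>s. \<eta>w s \<omega>" "\<lambda>s. gw s \<omega>", OF L sm sl]
    show ?case unfolding Z_def K_def rand_x_def
    proof (intro allI conjI)
      fix n
      show "Zp xs (Kc \<gamma> (norm xs)) (\<lambda>s. gw s \<omega>) (\<lambda>s. \<eta>w s \<omega>) (Suc n)
        \<le> Zp xs (Kc \<gamma> (norm xs)) (\<lambda>s. gw s \<omega>) (\<lambda>s. \<eta>w s \<omega>) n -
           exp (- 3 * (alg_S2 (\<lambda>s. gw s \<omega>) (\<lambda>s. \<eta>w s \<omega>) n - 4)) *
           (\<eta>w (Suc n) \<omega> * inner (gw (Suc n) \<omega>) (alg_x (\<lambda>s. gw s \<omega>) (\<lambda>s. \<eta>w s \<omega>) (Suc n) - xs))"
        by (rule D(1))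
      show "0 \<le> Zp xs (Kc \<gamma> (norm xs)) (\<lambda>s. gw s \<omega>) (\<lambda>s. \<eta>w s \<omega>) n" by (rule D(2))
      show "norm (alg_x (\<lambda>s. gw s \<omega>) (\<lambda>s. \<eta>w s \<omega>) (Suc n)) \<le> Zp xs (Kc \<gamma> (norm xs)) (\<lambda>s. gw s \<omega>) (\<lambda>s. \<eta>w s \<omega>) n * exp (3 * \<gamma>)"
        by (rule D(3))
      show "Zp xs (Kc \<gamma> (norm xs)) (\<lambda>s. gw s \<omega>) (\<lambda>s. \<eta>w s \<omega>) n \<le> exp (real n / 2) + real n * norm xs + Kc \<gamma> (norm xs)"
        by (rule D(4))
      show "norm (alg_x (\<lambda>s. gw s \<omega>) (\<lambda>s. \<eta>w s \<omega>) (Suc n)) \<le> exp (real n / 2)" by (rule D(5))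
    qed
  qed
  have vc': "\<And>x. inner (F' x) (x - xs) \<ge> 0" and cF: "continuous_on UNIV F'"
    using vcoh unfolding variationally_coherent_def by auto
  have am: "(\<lambda>\<omega>. alg_theta (\<lambda>s. gw s \<omega>) (\<lambda>s. \<eta>w s \<omega>) j) \<in> borel_measurable (Fi (Suc j))
       \<and> (\<lambda>\<omega>. alg_S2 (\<lambda>s. gw s \<omega>) (\<lambda>s. \<eta>w s \<omega>) j) \<in> borel_measurable (Fi (Suc j))
       \<and> (\<lambda>\<omega>. alg_Q (\<lambda>s. gw s \<omega>) (\<lambda>s. \<eta>w s \<omega>) j) \<in> borel_measurable (Fi (Suc j))" for j
    by (rule alg_meas) (auto intro: gF eF)
  have Zmeas: "Z j \<in> borel_measurable (Fi (Suc j))" for j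
  proof -
    note [measurable] = am[of j, THEN conjunct1] am[of j, THEN conjunct2, THEN conjunct1] am[of j, THEN conjunct2, THEN conjunct2]
    show ?thesis unfolding Z_def Zp_def Vp_def Psi_def ff_def hv_def clamp_def by measurable
  qed
  have ZM: "Z j \<in> borel_measurable M" for j by (rule measurable_from_subalg[OF subalg Zmeas])
  have Zint: "integrable M (Z j)" for j
  proof (rule integrable_const_bound[where B="exp (real j / 2) + real j * norm xs + K"])
    show "AE \<omega> in M. norm (Z j \<omega>) \<le> exp (real j / 2) + real j * norm xs + K"
      using det by eventually_elim auto
  qed (rule ZM)
  have z0: "Z 0 \<omega> = 1 + K" for \<omega>
    unfolding Z_def Zp_def Vp_def Psi_def ff_def hv_def by simp
  have sup: "(\<integral>\<omega>. indicator B \<omega> * Z (Suc j) \<omega> \<partial>M) \<le> (\<integral>\<omega>. indicator B \<omega> * Z j \<omega> \<partial>M)"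
    if B: "B \<in> sets (Fi (Suc j))" for j B
  proof (rule super_step[OF P subalg B Zint Zint, where eta="\<eta>w (Suc j)" and xx="rand_x gw \<eta>w (Suc j)"
        and gone="gw (Suc j)" and E="\<lambda>\<omega>. exp (-3 * (alg_S2 (\<lambda>s. gw s \<omega>) (\<lambda>s. \<eta>w s \<omega>) j - 4))"
        and ca="1/G" and G=G and cb="exp (real j / 2)" and F'=F' and xs=xs])
    show "(\<lambda>\<omega>. exp (-3 * (alg_S2 (\<lambda>s. gw s \<omega>) (\<lambda>s. \<eta>w s \<omega>) j - 4))) \<in> borel_measurable (Fi (Suc j))"
    proof -
      note [measurable] = am[of j, THEN conjunct2, THEN conjunct1]
      show ?thesis by measurable
    qed
    show "\<eta>w (Suc j) \<in> borel_measurable (Fi (Suc j))" by (rule eF) auto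
    show "rand_x gw \<eta>w (Suc j) \<in> borel_measurable (Fi (Suc j))" by (rule xF) auto
    show "gw (Suc j) \<in> borel_measurable M" using gm by simp
    show "0 \<le> exp (-3 * (alg_S2 (\<lambda>s. gw s \<omega>) (\<lambda>s. \<eta>w s \<omega>) j - 4)) \<and>
          exp (-3 * (alg_S2 (\<lambda>s. gw s \<omega>) (\<lambda>s. \<eta>w s \<omega>) j - 4)) \<le> 1" for \<omega>
      using alg_S2_ge[of "\<lambda>s. gw s \<omega>" "\<lambda>s. \<eta>w s \<omega>" j] by simp
    show "\<omega> \<in> space M \<Longrightarrow> 0 \<le> \<eta>w (Suc j) \<omega>" for \<omega> using e0 by simp
    show "AE \<omega> in M. \<eta>w (Suc j) \<omega> \<le> 1/G" using AEgood unfolding Good_def by eventually_elim simp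
    show "AE \<omega> in M. norm (gw (Suc j) \<omega>) \<le> G" using gb by eventually_elim simp
    show "AE \<omega> in M. norm (rand_x gw \<eta>w (Suc j) \<omega>) \<le> exp (real j / 2)" using det by eventually_elim blast
    show "\<And>x. inner (F' x) (x - xs) \<ge> 0" by (rule vc')
    show "continuous_on UNIV F'" by (rule cF)
    show "AE \<omega> in M. real_cond_exp M (Fi (Suc j)) (\<lambda>\<omega>. inner (gw (Suc j) \<omega>) b) \<omega> = inner (F' (rand_x gw \<eta>w (Suc j) \<omega>)) b"
      if "b \<in> Basis" for b using ce that unfolding Fi_def by simp
    show "AE \<omega> in M. Z (Suc j) \<omega> \<le> Z j \<omega> - exp (-3 * (alg_S2 (\<lambda>s. gw s \<omega>) (\<lambda>s. \<eta>w s \<omega>) j - 4)) *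
           (\<eta>w (Suc j) \<omega> * inner (gw (Suc j) \<omega>) (rand_x gw \<eta>w (Suc j) \<omega> - xs))"
      using det by eventually_elim blast
  qed
  have bdd: "AE \<omega> in M. bdd_above (range (\<lambda>j. Z j \<omega>))"
  proof (rule maximal_bdd[OF P, where Fl="\<lambda>j. Fi (Suc j)" and cz="1 + K"])
    show "\<And>j. sets (Fi (Suc j)) \<subseteq> sets M" by (rule Fsets)
    show "\<And>j. space (Fi (Suc j)) = space M" by (rule Fsp)
    show "\<And>j k. j \<le> k \<Longrightarrow> sets (Fi (Suc j)) \<subseteq> sets (Fi (Suc k))" by (rule Fmono) simp
    show "\<And>j. Z j \<in> borel_measurable (Fi (Suc j))" by (rule Zmeas)
    show "\<And>j. integrable M (Z j)" by (rule Zint)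
    show "AE \<omega> in M. \<forall>j. 0 \<le> Z j \<omega>" using det by eventually_elim blast
    show "\<And>\<omega>. \<omega> \<in> space M \<Longrightarrow> Z 0 \<omega> = 1 + K" by (rule z0)
    show "\<And>j B. B \<in> sets (Fi (Suc j)) \<Longrightarrow>
          (\<integral>\<omega>. indicator B \<omega> * Z (Suc j) \<omega> \<partial>M) \<le> (\<integral>\<omega>. indicator B \<omega> * Z j \<omega> \<partial>M)" by (rule sup)
  qed
  show ?thesis
    using bdd det
  proof eventually_elim
    case (elim \<omega>)
    obtain C where C: "\<And>j. Z j \<omega> \<le> C" using elim(1) unfolding bdd_above_def by auto
    show ?case
    proof (rule bdd_aboveI2)
      fix t :: nat assume "t \<in> {1..}"
      then obtain n where n: "t = Suc n" by (cases t) auto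
      have "norm (rand_x gw \<eta>w t \<omega>) \<le> Z n \<omega> * exp (3 * \<gamma>)" using elim(2) n by blast
      also have "\<dots> \<le> C * exp (3 * \<gamma>)" using C[of n] by (intro mult_right_mono) auto
      finally show "norm (rand_x gw \<eta>w t \<omega>) \<le> C * exp (3 * \<gamma>)" .
    qed
  qed
qed

theorem lemma20:
  fixes M :: "'w measure"
    and gw :: "nat \<Rightarrow> 'w \<Rightarrow> 'a::euclidean_space"
    and \<eta>w :: "nat \<Rightarrow> 'w \<Rightarrow> real"
    and F :: "'a \<Rightarrow> real" and F' :: "'a \<Rightarrow> 'a" and xs :: 'a
    and G \<gamma> :: real
  shows
   "(\<forall>(g :: nat \<Rightarrow> 'a) (\<eta> :: nat \<Rightarrow> real) t (y :: 'a).
       (\<forall>s\<ge>1. \<eta> s \<ge> 0) \<longrightarrow> 1 \<le> t \<longrightarrow>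
       norm (alg_x g \<eta> t) \<le>
         max (norm y + sqrt ((alg_S g \<eta> (t - 1) + 2) * bregman (alg_phi g \<eta> t) y (alg_x g \<eta> t)))
             (max (2 * norm y)
                  (4 * (alg_S g \<eta> (t - 1) + 2) * bregman (alg_phi g \<eta> t) y (alg_x g \<eta> t))))
    \<and>
    ((prob_space M \<and> G > 0 \<and> \<gamma> > 0 \<and>
      variationally_coherent F F' xs \<and>
      (\<forall>t\<ge>1. gw t \<in> borel_measurable M) \<and>
      (\<forall>t\<ge>1. rand_x gw \<eta>w t \<in> borel_measurable M) \<and>
      (\<forall>t\<ge>1. \<eta>w t \<in> borel_measurable (alg_filtration M gw \<eta>w t)) \<and>
      (\<forall>t\<ge>1. \<forall>w\<in>space M. \<eta>w t w \<ge> 0) \<and>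
      (\<forall>t\<ge>1. \<forall>b\<in>Basis. AE w in M.
          real_cond_exp M (alg_filtration M gw \<eta>w t) (\<lambda>w. inner (gw t w) b) w
            = inner (F' (rand_x gw \<eta>w t w)) b) \<and>
      (AE w in M. \<forall>t\<ge>1. norm (gw t w) \<le> G) \<and>
      (AE w in M.
          summable (\<lambda>t. (\<eta>w (Suc t) w)^2 * (norm (gw (Suc t) w))^2) \<and>
          (\<Sum>t. (\<eta>w (Suc t) w)^2 * (norm (gw (Suc t) w))^2) < \<gamma> \<and>
          \<not> summable (\<lambda>t. \<eta>w (Suc t) w) \<and>
          (\<forall>t\<ge>1. \<eta>w t w \<le> 1 / G)))
     \<longrightarrow> (AE w in M. bdd_above ((\<lambda>t. norm (rand_x gw \<eta>w t w)) ` {1..})))"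
  apply (intro conjI impI)
   apply (intro allI impI)
   apply (rule part_a)
   apply assumption
  apply (elim conjE)
  apply (rule lemma20_b; assumption)
  done

end
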